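(* Let $\Delta=(\mathcal{S},I)$ be a CPS theory, $\Sigma$ a set of concerns, and $n\ge0$. Then a sequence of actions $[a_0,\dots,a_{n-1}]$ is a mitigation strategy for $\Sigma$ from $I$ if and only if the program $\Pi(\Delta)\cup\Pi^n_{plan}[\Sigma]$ has an answer set $S$ such that $occurs(a_i,i)\in S$ for every $i=0,\dots,n-1$.
   Context: CPS system $\mathcal{S}=(CO,A,F,R,\Gamma)$: components $CO$, a deterministic action theory $(A,F)$ in action language $\mathcal{B}$ (executability conditions, dynamic laws "$a$ causes $f$ if $p_1..p_n$", static laws "$f$ if $p_1..p_n$"), with transition function $\Phi$ and its extension $\hat\Phi$ to action sequences ($\hat\Phi(\alpha,s)=\emptyset$ if $\alpha$ is not executable from $s$); $R$ maps components to properties; $\Gamma$ a set of triples $(c,fu,\psi)$ with $\psi$ a formula over properties. Concerns carry an acyclic sub-concern relation and relation $addBy(c,p)$; $\Lambda(c)$ is the conjunction of all $\psi$ with $(c,fu,\psi)\in\Gamma$ and of all properties $p$ with $addBy(c,p)$ not occurring in any such $\psi$; $s\models c$ iff $s\models\Lambda(c)$ and all sub-concerns of $c$ are satisfied in $s$. A CPS theory is $(\mathcal{S},I)$ with $I$ a state. A mitigation strategy for $\Sigma$ from $I$ is a sequence $\alpha$ of actions with $\hat\Phi(\alpha,I)\ne\emptyset$ such that every $c\in\Sigma$ is satisfied in the resulting state. $\Pi(\Delta)=\Pi(\mathcal{S})^n\cup\Pi(I)\cup\Pi_{sat}$, where: $\Pi(\mathcal{S})^n$ contains $step(t)$ ($0\le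 t\le n$), $action(a)$, $fluent(f)$, $concern(c)$, $prop(p)$, $subCo$, $addBy$ facts; rules $exec(a,T)\leftarrow step(T),h^*(p_1,T),..$ for executability conditions; $h^*(f,T{+}1)\leftarrow step(T),occurs(a,T),h^*(p_1,T),..$ for dynamic laws; $h^*(f,T)\leftarrow step(T),h^*(p_1,T),..$ for static laws; inertia rules $h(f,T{+}1)\leftarrow step(T),h(f,T),not\ \neg h(f,T{+}1)$ and $\neg h(f,T{+}1)\leftarrow step(T),\neg h(f,T),not\ h(f,T{+}1)$ (here $h^*(f,T)=h(f,T)$, $h^*(\neg f,T)=\neg h(f,T)$); and each $\Lambda(c)$ encoded as an NNF formula tree with facts $formula(g)$, $conjunction(g)$/$disjunction(g)$, $member(m,g)$ (children: properties, negated properties, or sub-formula identifiers), root $g_c$ a conjunction with $addConcern(c,g_c)$. $\Pi(I)$ contains $h(f,0)$ for $f$ true in $I$ and $\neg h(f,0)$ for $f$ false in $I$. $\Pi_{sat}$ is: $formula(\neg G)\leftarrow formula(G)$; $prop(\neg G)\leftarrow prop(G)$; $h(\neg F,T)\leftarrow step(T),1\{formula(F);prop(F)\},\neg h(F,T)$; $h(F,T)\leftarrow step(T),formula(F),disjunction(F),member(G,F),h(G,T)$; $\neg h(F,T)\leftarrow step(T),formula(F),disjunction(F),not\ h(F,T)$; $\neg h(F,T)\leftarrow step(T),1\{formula(G);prop(G)\},formula(F),conjunction(F),member(G,F),not\ h(G,T)$; $h(F,T)\leftarrow step(T),formula(F),conjunction(F),not\ \neg h(F,T)$; $\neg h(sat(C),T)\leftarrow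 concern(C),addConcern(C,F),not\ h(F,T),step(T)$; $\neg h(sat(X),T)\leftarrow subCo(X,Y),not\ h(sat(Y),T),concern(X),concern(Y),step(T)$; $\neg h(sat(X),T)\leftarrow subCo(X,Y),\neg h(sat(Y),T),concern(X),concern(Y),step(T)$; $h(sat(C),T)\leftarrow not\ \neg h(sat(C),T),concern(C),step(T)$. $\Pi^n_{plan}[\Sigma]$ consists of the choice rule $1\{occurs(A,T):action(A)\}1\leftarrow step(T),T<n$ (exactly one action occurs at each step $T<n$), the constraint $\leftarrow occurs(A,T),not\ exec(A,T)$, and for each $c\in\Sigma$ the constraint $\leftarrow not\ h(sat(c),n)$. Answer sets are in the standard stable-model sense for programs with classical negation, choice rules and constraints. *)

theory Defs
  imports Main
begin

section \<open>Action language B (deterministic action theories)\<close>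

text \<open>A fluent literal is a pair (f, b): (f, True) stands for f and
  (f, False) for the negated fluent.  A state is represented by the set of fluents true in
  it (hence it is automatically complete and consistent); it must be closed under the
  static laws.\<close>

datatype 'p pform = PTrue | PFalse | PVar 'p | PNot "'p pform"
  | PAnd "'p pform" "'p pform" | POr "'p pform" "'p pform" | PImp "'p pform" "'p pform"

fun peval :: "'p set \<Rightarrow> 'p pform \<Rightarrow> bool" where
  "peval s PTrue = True"
| "peval s PFalse = False"
| "peval s (PVar p) = (p \<in> s)"
| "peval s (PNot x) = (\<not> peval s x)"
| "peval s (PAnd x y) = (peval s x \<and> peval s y)"
| "peval s (POr x y) = (peval s x \<or> peval s y)"
| "peval s (PImp x y) = (peval s x \<longrightarrow> peval s y)"

fun pvars :: "'p pform \<Rightarrow> 'p set" where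
  "pvars PTrue = {}"
| "pvars PFalse = {}"
| "pvars (PVar p) = {p}"
| "pvars (PNot x) = pvars x"
| "pvars (PAnd x y) = pvars x \<union> pvars y"
| "pvars (POr x y) = pvars x \<union> pvars y"
| "pvars (PImp x y) = pvars x \<union> pvars y"

text \<open>A CPS system (CO, A, F, R, Gamma) together with its concern structure
  (sub-concern relation and addBy).  A = UNIV :: 'a set, F = UNIV :: 'f set,
  the set of concerns is UNIV :: 'c set.\<close>

record ('co, 'a, 'f, 'c, 'u) cps =
  cps_comps :: "'co set"
  cps_exec :: "('a \<times> ('f \<times> bool) list) set"
    \<comment> \<open>executability conditions: executable a if p1..pn\<close>
  cps_dyn :: "('a \<times> ('f \<times> bool) \<times> ('f \<times> bool) list) set"
    \<comment> \<open>dynamic laws: a causes l if p1..pn\<close>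
  cps_stat :: "(('f \<times> bool) \<times> ('f \<times> bool) list) set"
    \<comment> \<open>static laws: l if p1..pn\<close>
  cps_R :: "'co \<Rightarrow> 'f set"
  cps_gamma :: "('c \<times> 'u \<times> 'f pform) set"
  cps_subco :: "('c \<times> 'c) set"
    \<comment> \<open>(x, y) : y is a sub-concern of x\<close>
  cps_addby :: "('c \<times> 'f) set"

definition cps_props :: "('co, 'a, 'f, 'c, 'u) cps \<Rightarrow> 'f set" where
  "cps_props S = (\<Union>co\<in>cps_comps S. cps_R S co)"

definition flits :: "'f set \<Rightarrow> ('f \<times> bool) set" where
  "flits s = {(f, b). (f \<in> s) = b}"

definition holds_all :: "'f set \<Rightarrow> ('f \<times> bool) list \<Rightarrow> bool" where
  "holds_all s ps \<longleftrightarrow> set ps \<subseteq> flits s"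

definition is_state :: "('co, 'a, 'f, 'c, 'u) cps \<Rightarrow> 'f set \<Rightarrow> bool" where
  "is_state S s \<longleftrightarrow> (\<forall>(l, ps) \<in> cps_stat S. holds_all s ps \<longrightarrow> l \<in> flits s)"

definition executable :: "('co, 'a, 'f, 'c, 'u) cps \<Rightarrow> 'a \<Rightarrow> 'f set \<Rightarrow> bool" where
  "executable S a s \<longleftrightarrow> (\<exists>ps. (a, ps) \<in> cps_exec S \<and> holds_all s ps)"

definition direct_eff :: "('co, 'a, 'f, 'c, 'u) cps \<Rightarrow> 'a \<Rightarrow> 'f set \<Rightarrow> ('f \<times> bool) set" where
  "direct_eff S a s = {l. \<exists>ps. (a, l, ps) \<in> cps_dyn S \<and> holds_all s ps}"

definition cn :: "('co, 'a, 'f, 'c, 'u) cps \<Rightarrow> ('f \<times> bool) set \<Rightarrow> ('f \<times> bool) set" where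
  "cn S X = \<Inter>{Y. X \<subseteq> Y \<and> (\<forall>(l, ps) \<in> cps_stat S. set ps \<subseteq> Y \<longrightarrow> l \<in> Y)}"

definition trans :: "('co, 'a, 'f, 'c, 'u) cps \<Rightarrow> 'a \<Rightarrow> 'f set \<Rightarrow> 'f set set" where
  "trans S a s = (if executable S a s
     then {s'. flits s' = cn S (direct_eff S a s \<union> (flits s \<inter> flits s'))} else {})"

fun trans_seq :: "('co, 'a, 'f, 'c, 'u) cps \<Rightarrow> 'a list \<Rightarrow> 'f set \<Rightarrow> 'f set set" where
  "trans_seq S [] s = {s}"
| "trans_seq S (a # as) s = (\<Union>s' \<in> trans S a s. trans_seq S as s')"

definition deterministic :: "('co, 'a, 'f, 'c, 'u) cps \<Rightarrow> bool" where
  "deterministic S \<longleftrightarrow> (\<forall>a s s1 s2. is_state S s \<longrightarrow> s1 \<in> trans S a s \<longrightarrow> s2 \<in> trans S a s \<longrightarrow> s1 = s2)"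

section \<open>Concerns and their satisfaction\<close>

definition lam_sat :: "('co, 'a, 'f, 'c, 'u) cps \<Rightarrow> 'f set \<Rightarrow> 'c \<Rightarrow> bool" where
  "lam_sat S s c \<longleftrightarrow>
     (\<forall>(c', u, \<psi>) \<in> cps_gamma S. c' = c \<longrightarrow> peval s \<psi>) \<and>
     (\<forall>p. (c, p) \<in> cps_addby S \<and> (\<forall>(c', u, \<psi>) \<in> cps_gamma S. c' = c \<longrightarrow> p \<notin> pvars \<psi>)
          \<longrightarrow> p \<in> s)"

inductive csat :: "('co, 'a, 'f, 'c, 'u) cps \<Rightarrow> 'f set \<Rightarrow> 'c \<Rightarrow> bool" for S s where
  "lam_sat S s c \<Longrightarrow> (\<forall>y. (c, y) \<in> cps_subco S \<longrightarrow> csat S s y) \<Longrightarrow> csat S s c"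

definition mitigation :: "('co, 'a, 'f, 'c, 'u) cps \<Rightarrow> 'c set \<Rightarrow> 'f set \<Rightarrow> 'a list \<Rightarrow> bool" where
  "mitigation S \<Sigma> I \<alpha> \<longleftrightarrow> trans_seq S \<alpha> I \<noteq> {} \<and> (\<forall>s \<in> trans_seq S \<alpha> I. \<forall>c \<in> \<Sigma>. csat S s c)"

section \<open>NNF formula-tree encodings of Lambda(c)\<close>

datatype ('f, 'g) tmember = MProp 'f | MNegProp 'f | MFrm 'g

record ('f, 'c, 'g) tree_enc =
  te_fids :: "'g set"
  te_conj :: "'g set"
  te_disj :: "'g set"
  te_mem :: "(('f, 'g) tmember \<times> 'g) set"
  te_root :: "'c \<Rightarrow> 'g"

inductive tree_holds :: "('f, 'c, 'g) tree_enc \<Rightarrow> 'f set \<Rightarrow> 'g \<Rightarrow> bool" for E s where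
  conj: "g \<in> te_conj E \<Longrightarrow>
     (\<forall>p. (MProp p, g) \<in> te_mem E \<longrightarrow> p \<in> s) \<Longrightarrow>
     (\<forall>p. (MNegProp p, g) \<in> te_mem E \<longrightarrow> p \<notin> s) \<Longrightarrow>
     (\<forall>g'. (MFrm g', g) \<in> te_mem E \<longrightarrow> tree_holds E s g') \<Longrightarrow> tree_holds E s g"
| disjP: "g \<in> te_disj E \<Longrightarrow> (MProp p, g) \<in> te_mem E \<Longrightarrow> p \<in> s \<Longrightarrow> tree_holds E s g"
| disjN: "g \<in> te_disj E \<Longrightarrow> (MNegProp p, g) \<in> te_mem E \<Longrightarrow> p \<notin> s \<Longrightarrow> tree_holds E s g"
| disjF: "g \<in> te_disj E \<Longrightarrow> (MFrm g', g) \<in> te_mem E \<Longrightarrow> tree_holds E s g' \<Longrightarrow> tree_holds E s g"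

definition enc_ok :: "('co, 'a, 'f, 'c, 'u) cps \<Rightarrow> ('f, 'c, 'g) tree_enc \<Rightarrow> bool" where
  "enc_ok S E \<longleftrightarrow>
     finite (te_fids E) \<and> finite (te_mem E) \<and>
     te_conj E \<union> te_disj E = te_fids E \<and> te_conj E \<inter> te_disj E = {} \<and>
     (\<forall>c. te_root E c \<in> te_conj E) \<and>
     (\<forall>(m, g) \<in> te_mem E. g \<in> te_fids E \<and>
        (case m of MProp p \<Rightarrow> p \<in> cps_props S | MNegProp p \<Rightarrow> p \<in> cps_props S
                 | MFrm g' \<Rightarrow> g' \<in> te_fids E)) \<and>
     wf {(g', g). (MFrm g', g) \<in> te_mem E} \<and>
     (\<forall>c s. tree_holds E s (te_root E c) \<longleftrightarrow> lam_sat S s c)"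

section \<open>Ground answer set programs\<close>

datatype ('a, 'f, 'c, 'g) trm = TA 'a | TF 'f | TC 'c | TG 'g | TN nat
  | TNeg "('a, 'f, 'c, 'g) trm" | TSat "('a, 'f, 'c, 'g) trm"

datatype ('a, 'f, 'c, 'g) atom =
    Step "('a, 'f, 'c, 'g) trm" | Action "('a, 'f, 'c, 'g) trm" | Fluent "('a, 'f, 'c, 'g) trm"
  | Concern "('a, 'f, 'c, 'g) trm" | Prop "('a, 'f, 'c, 'g) trm"
  | SubCo "('a, 'f, 'c, 'g) trm" "('a, 'f, 'c, 'g) trm"
  | AddBy "('a, 'f, 'c, 'g) trm" "('a, 'f, 'c, 'g) trm"
  | Formula "('a, 'f, 'c, 'g) trm" | Conjunction "('a, 'f, 'c, 'g) trm"
  | Disjunction "('a, 'f, 'c, 'g) trm"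
  | Member "('a, 'f, 'c, 'g) trm" "('a, 'f, 'c, 'g) trm"
  | AddConcern "('a, 'f, 'c, 'g) trm" "('a, 'f, 'c, 'g) trm"
  | Exec "('a, 'f, 'c, 'g) trm" "('a, 'f, 'c, 'g) trm"
  | Occurs "('a, 'f, 'c, 'g) trm" "('a, 'f, 'c, 'g) trm"
  | H "('a, 'f, 'c, 'g) trm" "('a, 'f, 'c, 'g) trm"

text \<open>Classical literals: (True, a) is the atom a, (False, a) is its classical negation.\<close>
type_synonym ('a, 'f, 'c, 'g) lit = "bool \<times> ('a, 'f, 'c, 'g) atom"

text \<open>Ground rules: normal rules  head <- pos, not neg  (head None = constraint) and
  choice rules  lo {C} hi <- pos, not neg.\<close>
datatype ('a, 'f, 'c, 'g) rule =
    NRule "('a, 'f, 'c, 'g) lit option" "('a, 'f, 'c, 'g) lit list" "('a, 'f, 'c, 'g) lit list"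
  | CRule nat nat "('a, 'f, 'c, 'g) lit set" "('a, 'f, 'c, 'g) lit list" "('a, 'f, 'c, 'g) lit list"

fun rule_sat :: "('a, 'f, 'c, 'g) lit set \<Rightarrow> ('a, 'f, 'c, 'g) rule \<Rightarrow> bool" where
  "rule_sat M (NRule h p n) = (set p \<subseteq> M \<and> set n \<inter> M = {} \<longrightarrow>
      (case h of None \<Rightarrow> False | Some l \<Rightarrow> l \<in> M))"
| "rule_sat M (CRule lo hi C p n) = (set p \<subseteq> M \<and> set n \<inter> M = {} \<longrightarrow>
      lo \<le> card (C \<inter> M) \<and> card (C \<inter> M) \<le> hi)"

text \<open>Gelfond-Lifschitz reduct (choice rules as in Simons-Niemela-Soininen); constraints are
  handled by the requirement that M satisfies every rule.\<close>
definition reduct :: "('a, 'f, 'c, 'g) rule set \<Rightarrow> ('a, 'f, 'c, 'g) lit set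
    \<Rightarrow> (('a, 'f, 'c, 'g) lit \<times> ('a, 'f, 'c, 'g) lit list) set" where
  "reduct P M =
     {(l, p) | l p n. NRule (Some l) p n \<in> P \<and> set n \<inter> M = {}} \<union>
     {(l, p) | l lo hi C p n. CRule lo hi C p n \<in> P \<and> set n \<inter> M = {} \<and> l \<in> C \<inter> M}"

definition least_model :: "(('a, 'f, 'c, 'g) lit \<times> ('a, 'f, 'c, 'g) lit list) set
    \<Rightarrow> ('a, 'f, 'c, 'g) lit set" where
  "least_model R = \<Inter>{M. \<forall>(l, b) \<in> R. set b \<subseteq> M \<longrightarrow> l \<in> M}"

definition consistent_lits :: "('a, 'f, 'c, 'g) lit set \<Rightarrow> bool" where
  "consistent_lits M \<longleftrightarrow> \<not> (\<exists>x. (True, x) \<in> M \<and> (False, x) \<in> M)"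

definition answer_set :: "('a, 'f, 'c, 'g) rule set \<Rightarrow> ('a, 'f, 'c, 'g) lit set \<Rightarrow> bool" where
  "answer_set P M \<longleftrightarrow> consistent_lits M \<and> M = least_model (reduct P M) \<and> (\<forall>r \<in> P. rule_sat M r)"

section \<open>The program Pi(Delta) \<union> Pi_plan^n[Sigma]\<close>

abbreviation fact :: "('a, 'f, 'c, 'g) lit \<Rightarrow> ('a, 'f, 'c, 'g) rule" where
  "fact l \<equiv> NRule (Some l) [] []"

definition hstar :: "'f \<times> bool \<Rightarrow> ('a, 'f, 'c, 'g) trm \<Rightarrow> ('a, 'f, 'c, 'g) lit" where
  "hstar fl T = (snd fl, H (TF (fst fl)) T)"

definition memb_trm :: "('f, 'g) tmember \<Rightarrow> ('a, 'f, 'c, 'g) trm" where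
  "memb_trm m = (case m of MProp p \<Rightarrow> TF p | MNegProp p \<Rightarrow> TNeg (TF p) | MFrm g \<Rightarrow> TG g)"

text \<open>Pi(S)^n (time variables range over ground terms; where T+1 occurs they range over
  numerals only).\<close>
definition pi_sys :: "('co, 'a, 'f, 'c, 'u) cps \<Rightarrow> ('f, 'c, 'g) tree_enc \<Rightarrow> nat
    \<Rightarrow> ('a, 'f, 'c, 'g) rule set" where
  "pi_sys S E n =
     {fact (True, Step (TN t)) | t. t \<le> n}
   \<union> {fact (True, Action (TA a)) | a. True}
   \<union> {fact (True, Fluent (TF f)) | f. True}
   \<union> {fact (True, Concern (TC c)) | c. True}
   \<union> {fact (True, Prop (TF p)) | p. p \<in> cps_props S}
   \<union> {fact (True, SubCo (TC x) (TC y)) | x y. (x, y) \<in> cps_subco S}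
   \<union> {fact (True, AddBy (TC c) (TF p)) | c p. (c, p) \<in> cps_addby S}
   \<union> {NRule (Some (True, Exec (TA a) T)) ((True, Step T) # map (\<lambda>q. hstar q T) ps) []
        | a ps T. (a, ps) \<in> cps_exec S}
   \<union> {NRule (Some (hstar l (TN (Suc t))))
        ((True, Step (TN t)) # (True, Occurs (TA a) (TN t)) # map (\<lambda>q. hstar q (TN t)) ps) []
        | a l ps t. (a, l, ps) \<in> cps_dyn S}
   \<union> {NRule (Some (hstar l T)) ((True, Step T) # map (\<lambda>q. hstar q T) ps) []
        | l ps T. (l, ps) \<in> cps_stat S}
   \<union> {NRule (Some (True, H (TF f) (TN (Suc t))))
        [(True, Step (TN t)), (True, H (TF f) (TN t))] [(False, H (TF f) (TN (Suc t)))] | f t. True}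
   \<union> {NRule (Some (False, H (TF f) (TN (Suc t))))
        [(True, Step (TN t)), (False, H (TF f) (TN t))] [(True, H (TF f) (TN (Suc t)))] | f t. True}
   \<union> {fact (True, Formula (TG g)) | g. g \<in> te_fids E}
   \<union> {fact (True, Conjunction (TG g)) | g. g \<in> te_conj E}
   \<union> {fact (True, Disjunction (TG g)) | g. g \<in> te_disj E}
   \<union> {fact (True, Member (memb_trm m) (TG g)) | m g. (m, g) \<in> te_mem E}
   \<union> {fact (True, AddConcern (TC c) (TG (te_root E c))) | c. True}"

definition pi_init :: "'f set \<Rightarrow> ('a, 'f, 'c, 'g) rule set" where
  "pi_init I = {fact (True, H (TF f) (TN 0)) | f. f \<in> I} \<union> {fact (False, H (TF f) (TN 0)) | f. f \<notin> I}"

definition pi_sat :: "('a, 'f, 'c, 'g) rule set" where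
  "pi_sat =
     {NRule (Some (True, Formula (TNeg G))) [(True, Formula G)] [] | G. True}
   \<union> {NRule (Some (True, Prop (TNeg G))) [(True, Prop G)] [] | G. True}
   \<union> {NRule (Some (True, H (TNeg F) T)) [(True, Step T), (True, Formula F), (False, H F T)] [] | F T. True}
   \<union> {NRule (Some (True, H (TNeg F) T)) [(True, Step T), (True, Prop F), (False, H F T)] [] | F T. True}
   \<union> {NRule (Some (True, H F T)) [(True, Step T), (True, Formula F), (True, Disjunction F),
        (True, Member G F), (True, H G T)] [] | F G T. True}
   \<union> {NRule (Some (False, H F T)) [(True, Step T), (True, Formula F), (True, Disjunction F)]
        [(True, H F T)] | F T. True}
   \<union> {NRule (Some (False, H F T)) [(True, Step T), (True, Formula G), (True, Formula F),
        (True, Conjunction F), (True, Member G F)] [(True, H G T)] | F G T. True}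
   \<union> {NRule (Some (False, H F T)) [(True, Step T), (True, Prop G), (True, Formula F),
        (True, Conjunction F), (True, Member G F)] [(True, H G T)] | F G T. True}
   \<union> {NRule (Some (True, H F T)) [(True, Step T), (True, Formula F), (True, Conjunction F)]
        [(False, H F T)] | F T. True}
   \<union> {NRule (Some (False, H (TSat C) T)) [(True, Concern C), (True, AddConcern C F), (True, Step T)]
        [(True, H F T)] | C F T. True}
   \<union> {NRule (Some (False, H (TSat X) T)) [(True, SubCo X Y), (True, Concern X), (True, Concern Y),
        (True, Step T)] [(True, H (TSat Y) T)] | X Y T. True}
   \<union> {NRule (Some (False, H (TSat X) T)) [(True, SubCo X Y), (False, H (TSat Y) T),
        (True, Concern X), (True, Concern Y), (True, Step T)] [] | X Y T. True}
   \<union> {NRule (Some (True, H (TSat C) T)) [(True, Concern C), (True, Step T)]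
        [(False, H (TSat C) T)] | C T. True}"

definition pi_delta :: "('co, 'a, 'f, 'c, 'u) cps \<Rightarrow> ('f, 'c, 'g) tree_enc \<Rightarrow> 'f set \<Rightarrow> nat
    \<Rightarrow> ('a, 'f, 'c, 'g) rule set" where
  "pi_delta S E I n = pi_sys S E n \<union> pi_init I \<union> pi_sat"

definition pi_plan :: "nat \<Rightarrow> 'c set \<Rightarrow> ('a, 'f, 'c, 'g) rule set" where
  "pi_plan n \<Sigma> =
     {CRule 1 1 {(True, Occurs (TA a) (TN t)) | a. True} [(True, Step (TN t))] [] | t. t < n}
   \<union> {NRule None [(True, Occurs A T)] [(True, Exec A T)] | A T. True}
   \<union> {NRule None [] [(True, H (TSat (TC c)) (TN n))] | c. c \<in> \<Sigma>}"

definition wf_cps :: "('co, 'a, 'f, 'c, 'u) cps \<Rightarrow> bool" where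
  "wf_cps S \<longleftrightarrow>
     finite (UNIV :: 'a set) \<and> finite (UNIV :: 'f set) \<and> finite (UNIV :: 'c set) \<and>
     finite (cps_comps S) \<and> finite (cps_exec S) \<and> finite (cps_dyn S) \<and> finite (cps_stat S) \<and>
     finite (cps_gamma S) \<and>
     deterministic S \<and>
     acyclic (cps_subco S) \<and>
     (\<forall>(c, u, \<psi>) \<in> cps_gamma S. pvars \<psi> \<subseteq> cps_props S) \<and>
     (\<forall>(c, p) \<in> cps_addby S. p \<in> cps_props S)"

end

theory Submission imports Defs begin

inductive derivable :: "(('a,'f,'c,'g) lit \<times> ('a,'f,'c,'g) lit list) set \<Rightarrow> ('a,'f,'c,'g) lit \<Rightarrow> bool"
  for R where
  "(l,b) \<in> R \<Longrightarrow> \<forall>x\<in>set b. derivable R x \<Longrightarrow> derivable R l"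

lemma derivable_closed: "\<forall>(l, b) \<in> R. set b \<subseteq> {l. derivable R l} \<longrightarrow> l \<in> {l. derivable R l}"
  by (auto intro: derivable.intros)

lemma derivable_in: "derivable R l \<Longrightarrow> \<forall>(l, b) \<in> R. set b \<subseteq> X \<longrightarrow> l \<in> X \<Longrightarrow> l \<in> X"
proof (induction rule: derivable.induct)
  case (1 l b)
  then have "set b \<subseteq> X" by blast
  with 1 show ?case by blast
qed

lemma least_model_eq: "least_model R = {l. derivable R l}"
proof
  show "least_model R \<subseteq> {l. derivable R l}"
    unfolding least_model_def using derivable_closed[of R] by blast
next
  show "{l. derivable R l} \<subseteq> least_model R"
    unfolding least_model_def using derivable_in[of R] by blast
qed

lemma as_closed: "answer_set P M \<Longrightarrow> (l,b) \<in> reduct P M \<Longrightarrow> set b \<subseteq> M \<Longrightarrow> l \<in> M"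
proof -
  assume a: "answer_set P M" "(l,b) \<in> reduct P M" "set b \<subseteq> M"
  then have "\<forall>x\<in>set b. derivable (reduct P M) x"
    unfolding answer_set_def least_model_eq by blast
  then have "derivable (reduct P M) l" using a(2) by (blast intro: derivable.intros)
  then show ?thesis using a(1) unfolding answer_set_def least_model_eq by blast
qed

lemma as_derivable: "answer_set P M \<Longrightarrow> l \<in> M \<longleftrightarrow> derivable (reduct P M) l"
  unfolding answer_set_def least_model_eq by blast

lemma as_support: assumes "answer_set P M" "l \<in> M"
  shows "\<exists>b. (l,b) \<in> reduct P M \<and> set b \<subseteq> M"
proof -
  have "derivable (reduct P M) l" using assms as_derivable by blast
  then show ?thesis
  proof cases
    case (1 b)
    then show ?thesis using as_derivable[OF assms(1)] by blast
  qed
qed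

lemma as_induct: assumes "answer_set P M" "l \<in> M"
  and "\<And>l b. (l,b) \<in> reduct P M \<Longrightarrow> set b \<subseteq> M \<Longrightarrow> \<forall>x\<in>set b. Q x \<Longrightarrow> Q l"
  shows "Q l"
proof -
  have "derivable (reduct P M) l" using assms as_derivable by blast
  then show ?thesis
  proof induction
    case (1 l b)
    then show ?case using assms(3)[of l b] as_derivable[OF assms(1)] by blast
  qed
qed

lemma as_sat: "answer_set P M \<Longrightarrow> r \<in> P \<Longrightarrow> rule_sat M r"
  unfolding answer_set_def by blast

lemma as_cons: "answer_set P M \<Longrightarrow> (True, x) \<in> M \<Longrightarrow> (False, x) \<notin> M"
  unfolding answer_set_def consistent_lits_def by blast

lemma answer_setI:
  assumes "consistent_lits M" "\<forall>r\<in>P. rule_sat M r" "\<forall>l\<in>M. derivable (reduct P M) l"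
  shows "answer_set P M"
proof -
  have "{l. derivable (reduct P M) l} \<subseteq> M"
  proof
    fix l assume "l \<in> {l. derivable (reduct P M) l}"
    then have "derivable (reduct P M) l" by simp
    then show "l \<in> M"
    proof induction
      case (1 l b)
      have bM: "set b \<subseteq> M" using 1(2) by blast
      from 1(1) consider nn where "NRule (Some l) b nn \<in> P" "set nn \<inter> M = {}"
        | lo hi C nn where "CRule lo hi C b nn \<in> P" "l \<in> C \<inter> M"
        unfolding reduct_def by blast
      then show ?case
      proof cases
        case 1
        then show ?thesis using assms(2) bM by fastforce
      qed auto
    qed
  qed
  then show ?thesis using assms unfolding answer_set_def least_model_eq by blast
qed

fun isform :: "('f,'c,'g) tree_enc \<Rightarrow> ('a,'f,'c,'g) trm \<Rightarrow> bool" where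
  "isform E (TG g) = (g \<in> te_fids E)"
| "isform E (TNeg G) = isform E G"
| "isform E _ = False"

fun isprop :: "('co,'a,'f,'c,'u) cps \<Rightarrow> ('a,'f,'c,'g) trm \<Rightarrow> bool" where
  "isprop S (TF p) = (p \<in> cps_props S)"
| "isprop S (TNeg G) = isprop S G"
| "isprop S _ = False"

lemmas pdefs = reduct_def pi_delta_def pi_plan_def pi_sys_def pi_init_def pi_sat_def hstar_def

lemma flits_iff[simp]: "(f, b) \<in> flits s \<longleftrightarrow> (f \<in> s) = b"
  unfolding flits_def by simp

lemma cn_closed: "(l, ps) \<in> cps_stat S \<Longrightarrow> set ps \<subseteq> cn S X \<Longrightarrow> l \<in> cn S X"
  unfolding cn_def by blast

lemma cn_incl: "X \<subseteq> cn S X"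
  unfolding cn_def by blast

lemma cn_least: "X \<subseteq> Y \<Longrightarrow> (\<forall>(l, ps) \<in> cps_stat S. set ps \<subseteq> Y \<longrightarrow> l \<in> Y) \<Longrightarrow> cn S X \<subseteq> Y"
  unfolding cn_def by blast

lemma trans_state: "s' \<in> trans S a s \<Longrightarrow> is_state S s'"
proof -
  assume "s' \<in> trans S a s"
  then obtain X where X: "flits s' = cn S X" unfolding trans_def by (auto split: if_splits)
  show ?thesis unfolding is_state_def holds_all_def
  proof (intro ballI impI, clarify)
    fix l ps assume "(l, ps) \<in> cps_stat S" "set ps \<subseteq> flits s'"
    then show "l \<in> flits s'" unfolding X by (rule cn_closed)
  qed
qed

lemma trans_seq_det:
  assumes "deterministic S" "is_state S (st 0)" "\<forall>i<length as. st (Suc i) \<in> trans S (as ! i) (st i)"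
  shows "trans_seq S as (st 0) = {st (length as)}"
  using assms(2,3)
proof (induction as arbitrary: st)
  case Nil
  then show ?case by simp
next
  case (Cons a as)
  have t1: "st 1 \<in> trans S a (st 0)" using Cons.prems(2) by force
  have tr: "trans S a (st 0) = {st 1}"
    using t1 assms(1) Cons.prems(1) unfolding deterministic_def by blast
  have "trans_seq S as ((st \<circ> Suc) 0) = {(st \<circ> Suc) (length as)}"
    apply (rule Cons.IH)
    using trans_state[OF t1] Cons.prems(2) by auto
  then show ?case using tr by simp
qed

lemma tree_holds_not_fid: "tree_holds E s g \<Longrightarrow> g \<in> te_conj E \<or> g \<in> te_disj E"
  by (induction rule: tree_holds.induct) auto

lemma tree_holds_conj: "g \<in> te_conj E \<Longrightarrow> te_conj E \<inter> te_disj E = {} \<Longrightarrow>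
  tree_holds E s g \<longleftrightarrow> (\<forall>p. (MProp p, g) \<in> te_mem E \<longrightarrow> p \<in> s) \<and>
     (\<forall>p. (MNegProp p, g) \<in> te_mem E \<longrightarrow> p \<notin> s) \<and>
     (\<forall>g'. (MFrm g', g) \<in> te_mem E \<longrightarrow> tree_holds E s g')"
  by (subst tree_holds.simps) blast

lemma tree_holds_disj: "g \<in> te_disj E \<Longrightarrow> te_conj E \<inter> te_disj E = {} \<Longrightarrow>
  tree_holds E s g \<longleftrightarrow> (\<exists>p. (MProp p, g) \<in> te_mem E \<and> p \<in> s) \<or>
     (\<exists>p. (MNegProp p, g) \<in> te_mem E \<and> p \<notin> s) \<or>
     (\<exists>g'. (MFrm g', g) \<in> te_mem E \<and> tree_holds E s g')"
  by (subst tree_holds.simps) blast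

lemma csat_iff: "csat S s c \<longleftrightarrow> lam_sat S s c \<and> (\<forall>y. (c, y) \<in> cps_subco S \<longrightarrow> csat S s y)"
  by (subst csat.simps) blast

locale cpsctx =
  fixes S :: "('co, 'a, 'f, 'c, 'u) cps" and E :: "('f, 'c, 'g) tree_enc"
    and I :: "'f set" and n :: nat and \<Sigma> :: "'c set"
  assumes wf: "wf_cps S" and enc: "enc_ok S E" and ist: "is_state S I"
begin

abbreviation P :: "('a, 'f, 'c, 'g) rule set" where
  "P \<equiv> pi_delta S E I n \<union> pi_plan n \<Sigma>"

lemma enc_un: "te_conj E \<union> te_disj E = te_fids E"
  using enc unfolding enc_ok_def by blast
lemma enc_dis: "te_conj E \<inter> te_disj E = {}"
  using enc unfolding enc_ok_def by blast
lemma enc_root: "te_root E c \<in> te_conj E"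
  using enc unfolding enc_ok_def by blast
lemma enc_memg: "(m, g) \<in> te_mem E \<Longrightarrow> g \<in> te_fids E"
  using enc unfolding enc_ok_def by blast
lemma enc_memP: "(MProp p, g) \<in> te_mem E \<Longrightarrow> p \<in> cps_props S"
  using enc unfolding enc_ok_def by fastforce
lemma enc_memN: "(MNegProp p, g) \<in> te_mem E \<Longrightarrow> p \<in> cps_props S"
  using enc unfolding enc_ok_def by fastforce
lemma enc_memF: "(MFrm g', g) \<in> te_mem E \<Longrightarrow> g' \<in> te_fids E"
  using enc unfolding enc_ok_def by fastforce
lemma enc_wf: "wf {(g', g). (MFrm g', g) \<in> te_mem E}"
  using enc unfolding enc_ok_def by blast
lemma enc_sem: "tree_holds E s (te_root E c) \<longleftrightarrow> lam_sat S s c"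
  using enc unfolding enc_ok_def by blast
lemma subco_wf: "wf ((cps_subco S)\<inverse>)"
proof (rule finite_acyclic_wf_converse)
  have "finite (UNIV :: 'c set)" using wf unfolding wf_cps_def by blast
  then show "finite (cps_subco S)" by (metis finite_Prod_UNIV finite_subset subset_UNIV)
  show "acyclic (cps_subco S)" using wf unfolding wf_cps_def by blast
qed
lemma det: "deterministic S"
  using wf unfolding wf_cps_def by blast

lemma HTG_heads: "((True, H (TG g) T), bd) \<in> reduct P M \<Longrightarrow>
  (\<exists>G. bd = [(True, Step T), (True, Formula (TG g)), (True, Disjunction (TG g)), (True, Member G (TG g)), (True, H G T)])
 \<or> (bd = [(True, Step T), (True, Formula (TG g)), (True, Conjunction (TG g))] \<and> (False, H (TG g) T) \<notin> M)"
  apply (simp add: pdefs)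
  apply (elim disjE exE conjE)
  apply simp_all
  done

end

locale asctx = cpsctx S E I n \<Sigma>
  for S :: "('co, 'a, 'f, 'c, 'u) cps" and E :: "('f, 'c, 'g) tree_enc"
    and I :: "'f set" and n :: nat and \<Sigma> :: "'c set" +
  fixes M :: "('a, 'f, 'c, 'g) lit set"
  assumes AS: "answer_set P M"
begin

lemma supp: "l \<in> M \<Longrightarrow> \<exists>b. (l,b) \<in> reduct P M \<and> set b \<subseteq> M"
  using as_support[OF AS] .

lemma sat: "r \<in> P \<Longrightarrow> rule_sat M r"
  using as_sat[OF AS] .

lemma cons: "(True, x) \<in> M \<Longrightarrow> (False, x) \<notin> M"
  using as_cons[OF AS] .

lemma step_M: "(True, Step T) \<in> M \<Longrightarrow> \<exists>t. T = TN t \<and> t \<le> n"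
  using supp[of "(True, Step T)"] by (simp add: pdefs) auto

lemma formula_M: "(True, Formula T) \<in> M \<Longrightarrow> isform E T"
proof (induction T)
  case (TNeg T)
  then show ?case using supp[OF TNeg(2)] by (simp add: pdefs) auto
qed (use supp[of "(True, Formula _)"] in \<open>(simp add: pdefs; auto)\<close>)+

lemma prop_M: "(True, Prop T) \<in> M \<Longrightarrow> isprop S T"
proof (induction T)
  case (TNeg T)
  then show ?case using supp[OF TNeg(2)] by (simp add: pdefs) auto
qed (use supp[of "(True, Prop _)"] in \<open>(simp add: pdefs; auto)\<close>)+

lemma conj_M: "(True, Conjunction T) \<in> M \<Longrightarrow> \<exists>g. T = TG g \<and> g \<in> te_conj E"
  using supp[of "(True, Conjunction T)"] by (simp add: pdefs) auto

lemma disj_M: "(True, Disjunction T) \<in> M \<Longrightarrow> \<exists>g. T = TG g \<and> g \<in> te_disj E"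
  using supp[of "(True, Disjunction T)"] by (simp add: pdefs) auto

lemma member_M: "(True, Member G F) \<in> M \<Longrightarrow> \<exists>m g. G = memb_trm m \<and> F = TG g \<and> (m, g) \<in> te_mem E"
  using supp[of "(True, Member G F)"] by (simp add: pdefs) auto

lemma addc_M: "(True, AddConcern C F) \<in> M \<Longrightarrow> \<exists>c. C = TC c \<and> F = TG (te_root E c)"
  using supp[of "(True, AddConcern C F)"] by (simp add: pdefs) auto

lemma concern_M: "(True, Concern X) \<in> M \<Longrightarrow> \<exists>c. X = TC c"
  using supp[of "(True, Concern X)"] by (simp add: pdefs) auto

lemma subco_M: "(True, SubCo X Y) \<in> M \<Longrightarrow> \<exists>x y. X = TC x \<and> Y = TC y \<and> (x, y) \<in> cps_subco S"
  using supp[of "(True, SubCo X Y)"] by (simp add: pdefs) auto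

lemma occ_M: "(True, Occurs A T) \<in> M \<Longrightarrow> \<exists>a t. A = TA a \<and> T = TN t \<and> t < n"
  using supp[of "(True, Occurs A T)"] by (simp add: pdefs) auto

lemma exec_M: "(True, Exec A T) \<in> M \<Longrightarrow>
   \<exists>a ps. A = TA a \<and> (True, Step T) \<in> M \<and> (a, ps) \<in> cps_exec S \<and> (\<forall>q\<in>set ps. hstar q T \<in> M)"
  using supp[of "(True, Exec A T)"] by (simp add: pdefs) (auto simp: image_subset_iff)


lemma fact_M: "fact l \<in> P \<Longrightarrow> l \<in> M"
  using sat by fastforce

lemma step_in: "t \<le> n \<Longrightarrow> (True, Step (TN t)) \<in> M"
  by (rule fact_M) (simp add: pdefs)

lemma concern_in: "(True, Concern (TC c)) \<in> M"
  by (rule fact_M) (simp add: pdefs)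

lemma subco_in: "(x, y) \<in> cps_subco S \<Longrightarrow> (True, SubCo (TC x) (TC y)) \<in> M"
  by (rule fact_M) (simp add: pdefs)

lemma addc_in: "(True, AddConcern (TC c) (TG (te_root E c))) \<in> M"
  by (rule fact_M) (simp add: pdefs)

lemma formula_in: "g \<in> te_fids E \<Longrightarrow> (True, Formula (TG g)) \<in> M"
  by (rule fact_M) (simp add: pdefs)

lemma conj_in: "g \<in> te_conj E \<Longrightarrow> (True, Conjunction (TG g)) \<in> M"
  by (rule fact_M) (simp add: pdefs)

lemma disj_in: "g \<in> te_disj E \<Longrightarrow> (True, Disjunction (TG g)) \<in> M"
  by (rule fact_M) (simp add: pdefs)

lemma member_in: "(m, g) \<in> te_mem E \<Longrightarrow> (True, Member (memb_trm m) (TG g)) \<in> M"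
  by (rule fact_M) (simp add: pdefs, blast)

lemma prop_in: "p \<in> cps_props S \<Longrightarrow> (True, Prop (TF p)) \<in> M"
  by (rule fact_M) (simp add: pdefs)

lemma propneg_in: "p \<in> cps_props S \<Longrightarrow> (True, Prop (TNeg (TF p))) \<in> M"
proof -
  assume p: "p \<in> cps_props S"
  have "rule_sat M (NRule (Some (True, Prop (TNeg (TF p)))) [(True, Prop (TF p))] [])"
    by (rule sat) (simp add: pdefs)
  then show ?thesis using prop_in[OF p] by simp
qed

lemma init_in: "f \<in> I \<Longrightarrow> (True, H (TF f) (TN 0)) \<in> M"
  by (rule fact_M) (simp add: pdefs)

lemma init_in': "f \<notin> I \<Longrightarrow> (False, H (TF f) (TN 0)) \<in> M"
  by (rule fact_M) (simp add: pdefs)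

lemma compl: "t \<le> n \<Longrightarrow> (True, H (TF f) (TN t)) \<in> M \<or> (False, H (TF f) (TN t)) \<in> M"
proof (induction t)
  case 0
  then show ?case using init_in init_in' by blast
next
  case (Suc t)
  have r1: "rule_sat M (NRule (Some (True, H (TF f) (TN (Suc t))))
        [(True, Step (TN t)), (True, H (TF f) (TN t))] [(False, H (TF f) (TN (Suc t)))])"
    by (rule sat) (simp add: pdefs)
  have r2: "rule_sat M (NRule (Some (False, H (TF f) (TN (Suc t))))
        [(True, Step (TN t)), (False, H (TF f) (TN t))] [(True, H (TF f) (TN (Suc t)))])"
    by (rule sat) (simp add: pdefs)
  have "(True, Step (TN t)) \<in> M" using Suc by (intro step_in) simp
  then show ?case using Suc r1 r2 by auto
qed

definition stM :: "nat \<Rightarrow> 'f set" where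
  "stM t = {f. (True, H (TF f) (TN t)) \<in> M}"

lemma lit_M: "t \<le> n \<Longrightarrow> (b, H (TF f) (TN t)) \<in> M \<longleftrightarrow> (f \<in> stM t) = b"
  using compl[of t f] cons[of "H (TF f) (TN t)"] unfolding stM_def by (cases b) auto

lemma hstar_M: "t \<le> n \<Longrightarrow> hstar q (TN t) \<in> M \<longleftrightarrow> q \<in> flits (stM t)"
  using lit_M[of t "snd q" "fst q"] by (cases q) (simp add: hstar_def)

lemma st0: "stM 0 = I"
  using init_in init_in' cons unfolding stM_def by blast

lemma negp_M: "(True, H (TNeg (TF p)) (TN t)) \<in> M \<Longrightarrow> t \<le> n \<Longrightarrow> p \<notin> stM t"
  using supp[of "(True, H (TNeg (TF p)) (TN t))"] formula_M[of "TF p"] formula_M[of "TNeg (TF p)"]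
    lit_M[of t False p]
  by (simp add: pdefs) auto


end

locale asctx2 = asctx S E I n \<Sigma> M
  for S :: "('co, 'a, 'f, 'c, 'u) cps" and E :: "('f, 'c, 'g) tree_enc"
    and I :: "'f set" and n :: nat and \<Sigma> :: "'c set" and M :: "('a, 'f, 'c, 'g) lit set" +
  fixes \<alpha> :: "'a list"
  assumes len: "length \<alpha> = n"
    and occ: "\<forall>i<n. (True, Occurs (TA (\<alpha> ! i)) (TN i)) \<in> M"
begin

lemma occ_unique: "t < n \<Longrightarrow> (True, Occurs (TA a) (TN t)) \<in> M \<Longrightarrow> a = \<alpha> ! t"
proof -
  assume t: "t < n" and o: "(True, Occurs (TA a) (TN t)) \<in> M"
  define C :: "('a, 'f, 'c, 'g) lit set" where "C = {(True, Occurs (TA a) (TN t)) | a. True}"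
  have "rule_sat M (CRule 1 1 C [(True, Step (TN t))] [])"
  proof (rule sat)
    have "CRule 1 1 C [(True, Step (TN t))] [] \<in> {CRule 1 1 {(True, Occurs (TA a) (TN t)) | a. True} [(True, Step (TN t))] [] | t. t < n}"
      using t C_def by blast
    then show "CRule 1 1 C [(True, Step (TN t))] [] \<in> P" unfolding pi_plan_def by blast
  qed
  then have "card (C \<inter> M) = 1" using step_in[of t] t by simp
  then obtain x where x: "C \<inter> M = {x}" by (rule card_1_singletonE)
  have e1: "(True, Occurs (TA a) (TN t)) \<in> {x}" unfolding x[symmetric] using o C_def by blast
  have e2: "(True, Occurs (TA (\<alpha> ! t)) (TN t)) \<in> {x}" unfolding x[symmetric] using occ t C_def by blast
  have "((True, Occurs (TA a) (TN t)) :: ('a, 'f, 'c, 'g) lit) = (True, Occurs (TA (\<alpha> ! t)) (TN t))"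
    using trans[OF e1[unfolded singleton_iff] e2[unfolded singleton_iff, symmetric]] .
  then show ?thesis by simp
qed

lemma exec_ok: "t < n \<Longrightarrow> executable S (\<alpha> ! t) (stM t)"
proof -
  assume t: "t < n"
  have "rule_sat M (NRule None [(True, Occurs (TA (\<alpha> ! t)) (TN t))] [(True, Exec (TA (\<alpha> ! t)) (TN t))])"
    by (rule sat) (simp add: pdefs)
  then have "(True, Exec (TA (\<alpha> ! t)) (TN t)) \<in> M" using occ t by auto
  then obtain ps where "(\<alpha> ! t, ps) \<in> cps_exec S" "\<forall>q\<in>set ps. hstar q (TN t) \<in> M"
    using exec_M by blast
  then show ?thesis unfolding executable_def holds_all_def using hstar_M[of t] t by auto
qed

lemma cn_sup: "t < n \<Longrightarrow>
  cn S (direct_eff S (\<alpha> ! t) (stM t) \<union> (flits (stM t) \<inter> flits (stM (Suc t)))) \<subseteq> flits (stM (Suc t))"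
proof -
  assume t: "t < n"
  show ?thesis
  proof (rule cn_least)
    have "direct_eff S (\<alpha> ! t) (stM t) \<subseteq> flits (stM (Suc t))"
    proof
      fix l assume "l \<in> direct_eff S (\<alpha> ! t) (stM t)"
      then obtain ps where ps: "(\<alpha> ! t, l, ps) \<in> cps_dyn S" "holds_all (stM t) ps"
        unfolding direct_eff_def by blast
      have "rule_sat M (NRule (Some (hstar l (TN (Suc t))))
        ((True, Step (TN t)) # (True, Occurs (TA (\<alpha> ! t)) (TN t)) # map (\<lambda>q. hstar q (TN t)) ps) [])"
      proof (rule sat)
        let ?r = "NRule (Some (hstar l (TN (Suc t))))
        ((True, Step (TN t)) # (True, Occurs (TA (\<alpha> ! t)) (TN t)) # map (\<lambda>q. hstar q (TN t)) ps) []
            :: ('a, 'f, 'c, 'g) rule"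
        have "?r \<in> {NRule (Some (hstar l (TN (Suc t))))
        ((True, Step (TN t)) # (True, Occurs (TA a) (TN t)) # map (\<lambda>q. hstar q (TN t)) ps) []
        | a l ps t. (a, l, ps) \<in> cps_dyn S}" using ps by blast
        then show "?r \<in> P" unfolding pi_delta_def pi_sys_def by blast
      qed
      moreover have "set ((True, Step (TN t)) # (True, Occurs (TA (\<alpha> ! t)) (TN t)) # map (\<lambda>q. hstar q (TN t)) ps) \<subseteq> M"
        using ps(2) t step_in[of t] occ hstar_M[of t] unfolding holds_all_def by auto
      ultimately have "hstar l (TN (Suc t)) \<in> M" by simp
      then show "l \<in> flits (stM (Suc t))" using hstar_M[of "Suc t" l] t by simp
    qed
    then show "direct_eff S (\<alpha> ! t) (stM t) \<union> (flits (stM t) \<inter> flits (stM (Suc t))) \<subseteq> flits (stM (Suc t))"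
      by blast
  next
    show "\<forall>(l, ps)\<in>cps_stat S. set ps \<subseteq> flits (stM (Suc t)) \<longrightarrow> l \<in> flits (stM (Suc t))"
    proof (intro ballI impI, clarify)
      fix l ps assume ps: "(l, ps) \<in> cps_stat S" "set ps \<subseteq> flits (stM (Suc t))"
      have "rule_sat M (NRule (Some (hstar l (TN (Suc t)))) ((True, Step (TN (Suc t))) # map (\<lambda>q. hstar q (TN (Suc t))) ps) [])"
      proof (rule sat)
        let ?r = "NRule (Some (hstar l (TN (Suc t)))) ((True, Step (TN (Suc t))) # map (\<lambda>q. hstar q (TN (Suc t))) ps) []
            :: ('a, 'f, 'c, 'g) rule"
        have "?r \<in> {NRule (Some (hstar l T)) ((True, Step T) # map (\<lambda>q. hstar q T) ps) []
        | l ps T. (l, ps) \<in> cps_stat S}" using ps by blast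
        then show "?r \<in> P" unfolding pi_delta_def pi_sys_def by blast
      qed
      moreover have "set ((True, Step (TN (Suc t))) # map (\<lambda>q. hstar q (TN (Suc t))) ps) \<subseteq> M"
        using ps(2) t step_in[of "Suc t"] hstar_M[of "Suc t"] by auto
      ultimately have "hstar l (TN (Suc t)) \<in> M" by simp
      then show "l \<in> flits (stM (Suc t))" using hstar_M[of "Suc t" l] t by simp
    qed
  qed
qed


lemma HTF_heads: "((b, H (TF f) (TN k)), bd) \<in> reduct P M \<Longrightarrow>
  (\<exists>a ps t'. k = Suc t' \<and> (a, (f, b), ps) \<in> cps_dyn S \<and>
      bd = (True, Step (TN t')) # (True, Occurs (TA a) (TN t')) # map (\<lambda>q. hstar q (TN t')) ps)
 \<or> (\<exists>ps. ((f, b), ps) \<in> cps_stat S \<and> bd = (True, Step (TN k)) # map (\<lambda>q. hstar q (TN k)) ps)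
 \<or> (\<exists>t'. k = Suc t' \<and> bd = [(True, Step (TN t')), (b, H (TF f) (TN t'))])
 \<or> (k = 0 \<and> bd = [])
 \<or> (True, Formula (TF f)) \<in> set bd"
  apply (simp add: pdefs)
  apply (elim disjE exE conjE)
  apply simp_all
  apply blast+
  done

lemma cn_sub: assumes t: "t < n"
  shows "flits (stM (Suc t)) \<subseteq> cn S (direct_eff S (\<alpha> ! t) (stM t) \<union> (flits (stM t) \<inter> flits (stM (Suc t))))"
    (is "_ \<subseteq> cn S ?X")
proof
  fix fb assume fb: "fb \<in> flits (stM (Suc t))"
  obtain f b where fbd: "fb = (f, b)" by (cases fb)
  have inM: "(b, H (TF f) (TN (Suc t))) \<in> M" using fb fbd lit_M[of "Suc t" b f] t by simp
  have "\<forall>f' b'. ((b, H (TF f) (TN (Suc t))) :: ('a, 'f, 'c, 'g) lit) = (b', H (TF f') (TN (Suc t))) \<longrightarrow> (f', b') \<in> cn S ?X"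
  proof (rule as_induct[OF AS inM, where Q = "\<lambda>l. \<forall>f b. l = (b, H (TF f) (TN (Suc t))) \<longrightarrow> (f, b) \<in> cn S ?X"])
    fix l bd assume r: "(l, bd) \<in> reduct P M" and bdM: "set bd \<subseteq> M"
      and IH: "\<forall>x\<in>set bd. \<forall>f b. x = (b, H (TF f) (TN (Suc t))) \<longrightarrow> (f, b) \<in> cn S ?X"
    show "\<forall>f b. l = (b, H (TF f) (TN (Suc t))) \<longrightarrow> (f, b) \<in> cn S ?X"
    proof (intro allI impI)
      fix f b assume l: "l = (b, H (TF f) (TN (Suc t)))"
      have lM: "l \<in> M" using as_closed[OF AS r bdM] .
      have cX: "\<And>x. x \<in> ?X \<Longrightarrow> x \<in> cn S ?X" by (rule subsetD[OF cn_incl])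
      from HTF_heads[OF r[unfolded l]] show "(f, b) \<in> cn S ?X"
      proof (elim disjE exE conjE)
        fix a ps t' assume tt: "Suc t = Suc t'" and d: "(a, (f, b), ps) \<in> cps_dyn S"
          and bdd: "bd = (True, Step (TN t')) # (True, Occurs (TA a) (TN t')) # map (\<lambda>q. hstar q (TN t')) ps"
        have "(True, Occurs (TA a) (TN t)) \<in> M" using bdM bdd tt by auto
        then have a: "a = \<alpha> ! t" using occ_unique t by blast
        have "holds_all (stM t) ps" unfolding holds_all_def
        proof
          fix q assume "q \<in> set ps"
          then have "hstar q (TN t) \<in> M" using bdM bdd tt by auto
          then show "q \<in> flits (stM t)" using hstar_M[of t q] t by simp
        qed
        then have "(f, b) \<in> direct_eff S (\<alpha> ! t) (stM t)" unfolding direct_eff_def using d a by blast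
        then show ?thesis by (intro cX) blast
      next
        fix ps assume st: "((f, b), ps) \<in> cps_stat S"
          and bdd: "bd = (True, Step (TN (Suc t))) # map (\<lambda>q. hstar q (TN (Suc t))) ps"
        have "set ps \<subseteq> cn S ?X"
        proof
          fix q assume "q \<in> set ps"
          then have "hstar q (TN (Suc t)) \<in> set bd" using bdd by auto
          then show "q \<in> cn S ?X" using IH by (cases q) (auto simp: hstar_def)
        qed
        then show ?thesis by (rule cn_closed[OF st])
      next
        fix t' assume tt: "Suc t = Suc t'" and bdd: "bd = [(True, Step (TN t')), (b, H (TF f) (TN t'))]"
        have "(b, H (TF f) (TN t)) \<in> M" using bdM bdd tt by auto
        then have "(f, b) \<in> flits (stM t)" using lit_M[of t b f] t by simp
        moreover have "(f, b) \<in> flits (stM (Suc t))" using lM l lit_M[of "Suc t" b f] t by simp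
        ultimately show ?thesis by (intro cX) blast
      next
        assume "Suc t = 0" then show ?thesis by simp
      next
        assume "(True, Formula (TF f)) \<in> set bd"
        then have "isform E (TF f :: ('a, 'f, 'c, 'g) trm)" using bdM formula_M by blast
        then show ?thesis by simp
      qed
    qed
  qed
  then show "fb \<in> cn S ?X" using fbd by simp
qed

lemma trans_ok: "t < n \<Longrightarrow> stM (Suc t) \<in> trans S (\<alpha> ! t) (stM t)"
proof -
  assume t: "t < n"
  have "flits (stM (Suc t)) = cn S (direct_eff S (\<alpha> ! t) (stM t) \<union> (flits (stM t) \<inter> flits (stM (Suc t))))"
    using cn_sub[OF t] cn_sup[OF t] by (rule equalityI)
  then show ?thesis unfolding trans_def using exec_ok[OF t] by simp
qed


lemma tree_M: assumes t: "t \<le> n"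
  shows "(True, H (TG g) (TN t)) \<in> M \<Longrightarrow> tree_holds E (stM t) g"
proof (induction g rule: wf_induct[OF enc_wf])
  case (1 g)
  note IH = 1(1)[rule_format]
  obtain bd where r: "((True, H (TG g) (TN t)), bd) \<in> reduct P M" and bdM: "set bd \<subseteq> M"
    using supp[OF 1(2)] by blast
  from HTG_heads[OF r] show ?case
  proof (elim disjE exE conjE)
    fix G assume bdd: "bd = [(True, Step (TN t)), (True, Formula (TG g)), (True, Disjunction (TG g)),
        (True, Member G (TG g)), (True, H G (TN t))]"
    have gd: "g \<in> te_disj E" using disj_M[of "TG g"] bdM bdd by auto
    obtain m g0 where m: "G = memb_trm m" "TG g = (TG g0 :: ('a, 'f, 'c, 'g) trm)" "(m, g0) \<in> te_mem E"
      using member_M[of G "TG g"] bdM bdd by auto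
    then have m': "(m, g) \<in> te_mem E" by simp
    have hG: "(True, H G (TN t)) \<in> M" using bdM bdd by auto
    show ?case
    proof (cases m)
      case (MProp p)
      then have "p \<in> stM t" using hG m(1) lit_M[of t True p] t by (simp add: memb_trm_def)
      then show ?thesis using m' MProp gd by (auto intro: tree_holds.disjP)
    next
      case (MNegProp p)
      then have "p \<notin> stM t" using hG m(1) negp_M t by (simp add: memb_trm_def)
      then show ?thesis using m' MNegProp gd by (auto intro: tree_holds.disjN)
    next
      case (MFrm g')
      then have "tree_holds E (stM t) g'" using hG m(1) m' IH by (simp add: memb_trm_def)
      then show ?thesis using m' MFrm gd by (auto intro: tree_holds.disjF)
    qed
  next
    assume bdd: "bd = [(True, Step (TN t)), (True, Formula (TG g)), (True, Conjunction (TG g))]"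
      and nM: "(False, H (TG g) (TN t)) \<notin> M"
    have gc: "g \<in> te_conj E" using conj_M[of "TG g"] bdM bdd by auto
    have gf: "g \<in> te_fids E" using gc enc_un by blast
    have base: "(True, Step (TN t)) \<in> M" "(True, Formula (TG g)) \<in> M" "(True, Conjunction (TG g)) \<in> M"
      using bdM bdd by auto
    show ?case
    proof (rule tree_holds.conj[OF gc], safe)
      fix p assume mp: "(MProp p, g) \<in> te_mem E"
      have "rule_sat M (NRule (Some (False, H (TG g) (TN t))) [(True, Step (TN t)), (True, Prop (TF p)),
        (True, Formula (TG g)), (True, Conjunction (TG g)), (True, Member (TF p) (TG g))] [(True, H (TF p) (TN t))])"
        by (rule sat) (simp add: pdefs)
      moreover have "(True, Prop (TF p)) \<in> M" using prop_in enc_memP mp by blast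
      moreover have "(True, Member (TF p) (TG g)) \<in> M" using member_in[OF mp] by (simp add: memb_trm_def)
      ultimately have "(True, H (TF p) (TN t)) \<in> M" using base nM by auto
      then show "p \<in> stM t" using lit_M[of t True p] t by simp
    next
      fix p assume mp: "(MNegProp p, g) \<in> te_mem E" and ps: "p \<in> stM t"
      have "rule_sat M (NRule (Some (False, H (TG g) (TN t))) [(True, Step (TN t)), (True, Prop (TNeg (TF p))),
        (True, Formula (TG g)), (True, Conjunction (TG g)), (True, Member (TNeg (TF p)) (TG g))] [(True, H (TNeg (TF p)) (TN t))])"
        by (rule sat) (simp add: pdefs)
      moreover have "(True, Prop (TNeg (TF p))) \<in> M" using propneg_in enc_memN mp by blast
      moreover have "(True, Member (TNeg (TF p)) (TG g)) \<in> M" using member_in[OF mp] by (simp add: memb_trm_def)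
      ultimately have "(True, H (TNeg (TF p)) (TN t)) \<in> M" using base nM by auto
      then show False using negp_M t ps by blast
    next
      fix g' assume mp: "(MFrm g', g) \<in> te_mem E"
      have "rule_sat M (NRule (Some (False, H (TG g) (TN t))) [(True, Step (TN t)), (True, Formula (TG g')),
        (True, Formula (TG g)), (True, Conjunction (TG g)), (True, Member (TG g') (TG g))] [(True, H (TG g') (TN t))])"
        by (rule sat) (simp add: pdefs)
      moreover have "(True, Formula (TG g')) \<in> M" using formula_in enc_memF mp by blast
      moreover have "(True, Member (TG g') (TG g)) \<in> M" using member_in[OF mp] by (simp add: memb_trm_def)
      ultimately have "(True, H (TG g') (TN t)) \<in> M" using base nM by auto
      then show "tree_holds E (stM t) g'" using IH mp by blast
    qed
  qed
qed

lemma sat_M: "(True, H (TSat (TC c)) (TN n)) \<in> M \<Longrightarrow> csat S (stM n) c"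
proof (induction c rule: wf_induct[OF subco_wf])
  case (1 c)
  note IH = 1(1)[rule_format]
  have nM: "(False, H (TSat (TC c)) (TN n)) \<notin> M" using cons 1(2) by blast
  have base: "(True, Step (TN n)) \<in> M" "(True, Concern (TC c)) \<in> M" using step_in concern_in by auto
  have "rule_sat M (NRule (Some (False, H (TSat (TC c)) (TN n))) [(True, Concern (TC c)),
     (True, AddConcern (TC c) (TG (te_root E c))), (True, Step (TN n))] [(True, H (TG (te_root E c)) (TN n))])"
    by (rule sat) (simp add: pdefs)
  then have "(True, H (TG (te_root E c)) (TN n)) \<in> M" using base nM addc_in[of c] by auto
  then have ls: "lam_sat S (stM n) c" using tree_M[of n "te_root E c"] enc_sem[of "stM n" c] by simp
  have "csat S (stM n) y" if y: "(c, y) \<in> cps_subco S" for y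
  proof -
    have "rule_sat M (NRule (Some (False, H (TSat (TC c)) (TN n))) [(True, SubCo (TC c) (TC y)),
       (True, Concern (TC c)), (True, Concern (TC y)), (True, Step (TN n))] [(True, H (TSat (TC y)) (TN n))])"
      by (rule sat) (simp add: pdefs)
    then have "(True, H (TSat (TC y)) (TN n)) \<in> M" using base nM concern_in[of y] subco_in[OF y] by auto
    then show ?thesis using IH[of y] y by simp
  qed
  then show ?case using ls csat_iff[of S "stM n" c] by blast
qed

lemma mitig: "mitigation S \<Sigma> I \<alpha>"
proof -
  have "trans_seq S \<alpha> (stM 0) = {stM (length \<alpha>)}"
  proof (rule trans_seq_det[OF det])
    show "is_state S (stM 0)" using st0 ist by simp
    show "\<forall>i<length \<alpha>. stM (Suc i) \<in> trans S (\<alpha> ! i) (stM i)" using len trans_ok by simp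
  qed
  then have ts: "trans_seq S \<alpha> I = {stM n}" using st0 len by simp
  have "csat S (stM n) c" if c: "c \<in> \<Sigma>" for c
  proof -
    have "rule_sat M (NRule None [] [(True, H (TSat (TC c)) (TN n))])"
      by (rule sat) (use c in \<open>simp add: pdefs\<close>)
    then show ?thesis using sat_M[of c] by simp
  qed
  then show ?thesis unfolding mitigation_def ts by simp
qed

end

locale mctx = cpsctx S E I n \<Sigma>
  for S :: "('co, 'a, 'f, 'c, 'u) cps" and E :: "('f, 'c, 'g) tree_enc"
    and I :: "'f set" and n :: nat and \<Sigma> :: "'c set" +
  fixes \<alpha> :: "'a list" and sq :: "nat \<Rightarrow> 'f set"
  assumes len: "length \<alpha> = n"
    and sq0: "sq 0 = I"
    and sq_tr: "\<forall>t<n. sq (Suc t) \<in> trans S (\<alpha> ! t) (sq t)"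
    and sq_end: "sq (Suc n) = sq n"
    and sq_sat: "\<forall>c\<in>\<Sigma>. csat S (sq n) c"
begin

definition M0 :: "('a, 'f, 'c, 'g) lit set" where
  "M0 = {(True, Step (TN t)) | t. t \<le> n}
   \<union> {(True, Action (TA a)) | a. True}
   \<union> {(True, Fluent (TF f)) | f. True}
   \<union> {(True, Concern (TC c)) | c. True}
   \<union> {(True, Prop T) | T. isprop S T}
   \<union> {(True, SubCo (TC x) (TC y)) | x y. (x, y) \<in> cps_subco S}
   \<union> {(True, AddBy (TC c) (TF p)) | c p. (c, p) \<in> cps_addby S}
   \<union> {(True, Formula T) | T. isform E T}
   \<union> {(True, Conjunction (TG g)) | g. g \<in> te_conj E}
   \<union> {(True, Disjunction (TG g)) | g. g \<in> te_disj E}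
   \<union> {(True, Member (memb_trm m) (TG g)) | m g. (m, g) \<in> te_mem E}
   \<union> {(True, AddConcern (TC c) (TG (te_root E c))) | c. True}
   \<union> {(True, Exec (TA a) (TN t)) | a t. t \<le> n \<and> executable S a (sq t)}
   \<union> {(True, Occurs (TA (\<alpha> ! t)) (TN t)) | t. t < n}
   \<union> {(f \<in> sq t, H (TF f) (TN t)) | f t. t \<le> Suc n}
   \<union> {(tree_holds E (sq t) g, H (TG g) (TN t)) | g t. t \<le> n \<and> g \<in> te_fids E}
   \<union> {(True, H (TNeg (TG g)) (TN t)) | g t. t \<le> n \<and> g \<in> te_fids E \<and> \<not> tree_holds E (sq t) g}
   \<union> {(True, H (TNeg (TF p)) (TN t)) | p t. t \<le> n \<and> p \<in> cps_props S \<and> p \<notin> sq t}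
   \<union> {(csat S (sq t) c, H (TSat (TC c)) (TN t)) | c t. t \<le> n}"

lemma m0_cons: "consistent_lits M0"
  unfolding consistent_lits_def M0_def by auto

lemma m0_HTF: "(b, H (TF f) T) \<in> M0 \<longleftrightarrow> (\<exists>t. T = TN t \<and> t \<le> Suc n \<and> (f \<in> sq t) = b)"
  unfolding M0_def by auto

lemma m0_step: "(b, Step T) \<in> M0 \<longleftrightarrow> b \<and> (\<exists>t. T = TN t \<and> t \<le> n)"
  unfolding M0_def by auto

lemma m0_occ: "(b, Occurs A T) \<in> M0 \<longleftrightarrow> b \<and> (\<exists>t. A = TA (\<alpha> ! t) \<and> T = TN t \<and> t < n)"
  unfolding M0_def by auto

lemma m0_exec: "(b, Exec A T) \<in> M0 \<longleftrightarrow> b \<and> (\<exists>a t. A = TA a \<and> T = TN t \<and> t \<le> n \<and> executable S a (sq t))"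
  unfolding M0_def by auto

lemma m0_formula: "(b, Formula T) \<in> M0 \<longleftrightarrow> b \<and> isform E T"
  unfolding M0_def by auto

lemma m0_prop: "(b, Prop T) \<in> M0 \<longleftrightarrow> b \<and> isprop S T"
  unfolding M0_def by auto

lemma m0_conj: "(b, Conjunction T) \<in> M0 \<longleftrightarrow> b \<and> (\<exists>g. T = TG g \<and> g \<in> te_conj E)"
  unfolding M0_def by auto

lemma m0_disj: "(b, Disjunction T) \<in> M0 \<longleftrightarrow> b \<and> (\<exists>g. T = TG g \<and> g \<in> te_disj E)"
  unfolding M0_def by auto

lemma m0_member: "(b, Member G F) \<in> M0 \<longleftrightarrow> b \<and> (\<exists>m g. G = memb_trm m \<and> F = TG g \<and> (m, g) \<in> te_mem E)"
  unfolding M0_def by auto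

lemma m0_concern: "(b, Concern X) \<in> M0 \<longleftrightarrow> b \<and> (\<exists>c. X = TC c)"
  unfolding M0_def by auto

lemma m0_subco: "(b, SubCo X Y) \<in> M0 \<longleftrightarrow> b \<and> (\<exists>x y. X = TC x \<and> Y = TC y \<and> (x, y) \<in> cps_subco S)"
  unfolding M0_def by auto

lemma m0_addc: "(b, AddConcern C F) \<in> M0 \<longleftrightarrow> b \<and> (\<exists>c. C = TC c \<and> F = TG (te_root E c))"
  unfolding M0_def by auto

lemma m0_HTG: "(b, H (TG g) T) \<in> M0 \<longleftrightarrow> (\<exists>t. T = TN t \<and> t \<le> n \<and> g \<in> te_fids E \<and> tree_holds E (sq t) g = b)"
  unfolding M0_def by auto

lemma m0_HSat: "(b, H (TSat X) T) \<in> M0 \<longleftrightarrow> (\<exists>c t. X = TC c \<and> T = TN t \<and> t \<le> n \<and> csat S (sq t) c = b)"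
  unfolding M0_def by auto

lemma m0_HNegG: "(b, H (TNeg (TG g)) T) \<in> M0 \<longleftrightarrow> b \<and> (\<exists>t. T = TN t \<and> t \<le> n \<and> g \<in> te_fids E \<and> \<not> tree_holds E (sq t) g)"
  unfolding M0_def by auto

lemma m0_HNegF: "(b, H (TNeg (TF p)) T) \<in> M0 \<longleftrightarrow> b \<and> (\<exists>t. T = TN t \<and> t \<le> n \<and> p \<in> cps_props S \<and> p \<notin> sq t)"
  unfolding M0_def by auto

lemma m0_HNegNeg: "(b, H (TNeg (TNeg G)) T) \<notin> M0"
  unfolding M0_def by auto

lemma m0_HNegO: "G \<noteq> TNeg G' \<Longrightarrow> (\<forall>g. G \<noteq> TG g) \<Longrightarrow> (\<forall>p. G \<noteq> TF p) \<Longrightarrow> (b, H (TNeg G) T) \<notin> M0"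
  unfolding M0_def by auto


lemma m0_H: "(b, H F T) \<in> M0 \<longleftrightarrow>
   (\<exists>f t. F = TF f \<and> T = TN t \<and> t \<le> Suc n \<and> (f \<in> sq t) = b)
 \<or> (\<exists>g t. F = TG g \<and> T = TN t \<and> t \<le> n \<and> g \<in> te_fids E \<and> tree_holds E (sq t) g = b)
 \<or> (b \<and> (\<exists>g t. F = TNeg (TG g) \<and> T = TN t \<and> t \<le> n \<and> g \<in> te_fids E \<and> \<not> tree_holds E (sq t) g))
 \<or> (b \<and> (\<exists>p t. F = TNeg (TF p) \<and> T = TN t \<and> t \<le> n \<and> p \<in> cps_props S \<and> p \<notin> sq t))
 \<or> (\<exists>c t. F = TSat (TC c) \<and> T = TN t \<and> t \<le> n \<and> csat S (sq t) c = b)"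
  unfolding M0_def by auto

lemma m0_hstar: "hstar q T \<in> M0 \<longleftrightarrow> (\<exists>t. T = TN t \<and> t \<le> Suc n \<and> q \<in> flits (sq t))"
  by (cases q) (simp add: hstar_def m0_HTF)

lemma sq_state: "t \<le> Suc n \<Longrightarrow> is_state S (sq t)"
proof (induction t)
  case 0 then show ?case using sq0 ist by simp
next
  case (Suc t)
  show ?case
  proof (cases "t < n")
    case True
    then have "sq (Suc t) \<in> trans S (\<alpha> ! t) (sq t)" using sq_tr by blast
    then show ?thesis by (rule trans_state)
  next
    case False then have tn: "t = n" using Suc by simp
    have "is_state S (sq t)" using Suc.IH tn by simp
    then show ?thesis using sq_end tn by simp
  qed
qed

lemma sq_exec: "t < n \<Longrightarrow> executable S (\<alpha> ! t) (sq t)"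
proof (rule ccontr)
  assume "t < n" "\<not> executable S (\<alpha> ! t) (sq t)"
  then have "trans S (\<alpha> ! t) (sq t) = {}" unfolding trans_def by simp
  then show False using sq_tr \<open>t < n\<close> by blast
qed

lemma sq_flits: "t < n \<Longrightarrow> flits (sq (Suc t)) = cn S (direct_eff S (\<alpha> ! t) (sq t) \<union> (flits (sq t) \<inter> flits (sq (Suc t))))"
proof -
  assume t: "t < n"
  then have "sq (Suc t) \<in> trans S (\<alpha> ! t) (sq t)" using sq_tr by blast
  moreover have "trans S (\<alpha> ! t) (sq t) = {s'. flits s' = cn S (direct_eff S (\<alpha> ! t) (sq t) \<union> (flits (sq t) \<inter> flits s'))}"
    unfolding trans_def using sq_exec[OF t] by (rule if_P)
  ultimately show ?thesis by blast
qed

lemma rs_exec: "(a, ps) \<in> cps_exec S \<Longrightarrow>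
  rule_sat M0 (NRule (Some (True, Exec (TA a) T)) ((True, Step T) # map (\<lambda>q. hstar q T) ps) [])"
proof (simp, intro impI, elim conjE)
  assume ex: "(a, ps) \<in> cps_exec S" and st: "(True, Step T) \<in> M0" and hs: "(\<lambda>q. hstar q T) ` set ps \<subseteq> M0"
  obtain t where t: "T = TN t" "t \<le> n" using st m0_step by blast
  have "holds_all (sq t) ps" unfolding holds_all_def using hs t by (auto simp: m0_hstar)
  then have "executable S a (sq t)" using ex unfolding executable_def by blast
  then show "(True, Exec (TA a) T) \<in> M0" using t by (simp add: m0_exec)
qed

lemma rs_dyn: "(a, l, ps) \<in> cps_dyn S \<Longrightarrow>
  rule_sat M0 (NRule (Some (hstar l (TN (Suc t))))
        ((True, Step (TN t)) # (True, Occurs (TA a) (TN t)) # map (\<lambda>q. hstar q (TN t)) ps) [])"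
proof (simp, intro impI, elim conjE)
  assume d: "(a, l, ps) \<in> cps_dyn S" and oc: "(True, Occurs (TA a) (TN t)) \<in> M0"
    and hs: "(\<lambda>q. hstar q (TN t)) ` set ps \<subseteq> M0"
  have t: "t < n" "a = \<alpha> ! t" using oc by (auto simp: m0_occ)
  have "holds_all (sq t) ps" unfolding holds_all_def using hs by (auto simp: m0_hstar)
  then have "l \<in> direct_eff S (\<alpha> ! t) (sq t)" using d t unfolding direct_eff_def by blast
  then have "l \<in> flits (sq (Suc t))" using sq_flits[OF t(1)] cn_incl by blast
  then show "hstar l (TN (Suc t)) \<in> M0" using t by (auto simp: m0_hstar)
qed

lemma rs_stat: "(l, ps) \<in> cps_stat S \<Longrightarrow>
  rule_sat M0 (NRule (Some (hstar l T)) ((True, Step T) # map (\<lambda>q. hstar q T) ps) [])"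
proof (simp, intro impI, elim conjE)
  assume d: "(l, ps) \<in> cps_stat S" and st: "(True, Step T) \<in> M0"
    and hs: "(\<lambda>q. hstar q T) ` set ps \<subseteq> M0"
  obtain t where t: "T = TN t" "t \<le> n" using st m0_step by blast
  have "holds_all (sq t) ps" unfolding holds_all_def using hs t by (auto simp: m0_hstar)
  then have "l \<in> flits (sq t)" using d sq_state[of t] t unfolding is_state_def by auto
  then show "hstar l T \<in> M0" using t by (auto simp: m0_hstar)
qed

lemma rs_inT: "rule_sat M0 (NRule (Some (True, H (TF f) (TN (Suc t))))
        [(True, Step (TN t)), (True, H (TF f) (TN t))] [(False, H (TF f) (TN (Suc t)))])"
  by (auto simp: m0_step m0_HTF)

lemma rs_inF: "rule_sat M0 (NRule (Some (False, H (TF f) (TN (Suc t))))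
        [(True, Step (TN t)), (False, H (TF f) (TN t))] [(True, H (TF f) (TN (Suc t)))])"
  by (auto simp: m0_step m0_HTF)


lemma rs_s1: "rule_sat M0 (NRule (Some (True, Formula (TNeg G))) [(True, Formula G)] [])"
  by (simp add: m0_formula)

lemma rs_s2: "rule_sat M0 (NRule (Some (True, Prop (TNeg G))) [(True, Prop G)] [])"
  by (simp add: m0_prop)

lemma rs_s3: "rule_sat M0 (NRule (Some (True, H (TNeg F) T)) [(True, Step T), (True, Formula F), (False, H F T)] [])"
  by (auto simp: m0_step m0_formula m0_H)

lemma rs_s4: "rule_sat M0 (NRule (Some (True, H (TNeg F) T)) [(True, Step T), (True, Prop F), (False, H F T)] [])"
  by (auto simp: m0_step m0_prop m0_H)

lemma rs_s5: "rule_sat M0 (NRule (Some (True, H F T)) [(True, Step T), (True, Formula F), (True, Disjunction F),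
        (True, Member G F), (True, H G T)] [])"
proof (simp only: rule_sat.simps, intro impI, elim conjE)
  assume b: "set [(True, Step T), (True, Formula F), (True, Disjunction F), (True, Member G F), (True, H G T)] \<subseteq> M0"
  obtain t where t: "T = TN t" "t \<le> n" using b by (auto simp: m0_step)
  obtain g where g: "F = TG g" "g \<in> te_disj E" using b by (auto simp: m0_disj)
  obtain m where m: "G = memb_trm m" "(m, g) \<in> te_mem E" using b g by (auto simp: m0_member)
  have hG: "(True, H G T) \<in> M0" using b by simp
  have gf: "g \<in> te_fids E" using g enc_un by blast
  have "tree_holds E (sq t) g"
  proof (cases m)
    case (MProp p)
    then show ?thesis using hG m t g by (auto simp: memb_trm_def m0_H intro: tree_holds.disjP)
  next
    case (MNegProp p)
    then show ?thesis using hG m t g by (auto simp: memb_trm_def m0_H intro: tree_holds.disjN)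
  next
    case (MFrm g')
    then show ?thesis using hG m t g by (auto simp: memb_trm_def m0_H intro: tree_holds.disjF)
  qed
  then show "(case Some (True, H F T) of None \<Rightarrow> False | Some l \<Rightarrow> l \<in> M0)"
    using t g gf by (simp add: m0_H)
qed

lemma rs_s6: "rule_sat M0 (NRule (Some (False, H F T)) [(True, Step T), (True, Formula F), (True, Disjunction F)]
        [(True, H F T)])"
  using enc_un by (auto simp: m0_step m0_formula m0_disj m0_H)

lemma rs_s9: "rule_sat M0 (NRule (Some (True, H F T)) [(True, Step T), (True, Formula F), (True, Conjunction F)]
        [(False, H F T)])"
  using enc_un by (auto simp: m0_step m0_formula m0_conj m0_H)

lemma rs_s7: "rule_sat M0 (NRule (Some (False, H F T)) [(True, Step T), (True, Formula G), (True, Formula F),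
        (True, Conjunction F), (True, Member G F)] [(True, H G T)])"
proof (simp only: rule_sat.simps, intro impI, elim conjE)
  assume b: "set [(True, Step T), (True, Formula G), (True, Formula F),
        (True, Conjunction F), (True, Member G F)] \<subseteq> M0" and nb: "set [(True, H G T)] \<inter> M0 = {}"
  obtain t where t: "T = TN t" "t \<le> n" using b by (auto simp: m0_step)
  obtain g where g: "F = TG g" "g \<in> te_conj E" using b by (auto simp: m0_conj)
  obtain m where m: "G = memb_trm m" "(m, g) \<in> te_mem E" using b g by (auto simp: m0_member)
  have fG: "isform E G" using b by (simp add: m0_formula)
  obtain g' where g': "m = MFrm g'" using fG m by (cases m) (auto simp: memb_trm_def)
  have gf': "g' \<in> te_fids E" using enc_memF m g' by blast
  have "\<not> tree_holds E (sq t) g'" using nb t m g' gf' by (auto simp: memb_trm_def m0_H)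
  then have "\<not> tree_holds E (sq t) g" using tree_holds_conj[OF g(2) enc_dis] m g' by blast
  moreover have "g \<in> te_fids E" using g enc_un by blast
  ultimately show "(case Some (False, H F T) of None \<Rightarrow> False | Some l \<Rightarrow> l \<in> M0)"
    using t g by (simp add: m0_H)
qed

lemma rs_s8: "rule_sat M0 (NRule (Some (False, H F T)) [(True, Step T), (True, Prop G), (True, Formula F),
        (True, Conjunction F), (True, Member G F)] [(True, H G T)])"
proof (simp only: rule_sat.simps, intro impI, elim conjE)
  assume b: "set [(True, Step T), (True, Prop G), (True, Formula F),
        (True, Conjunction F), (True, Member G F)] \<subseteq> M0" and nb: "set [(True, H G T)] \<inter> M0 = {}"
  obtain t where t: "T = TN t" "t \<le> n" using b by (auto simp: m0_step)
  obtain g where g: "F = TG g" "g \<in> te_conj E" using b by (auto simp: m0_conj)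
  obtain m where m: "G = memb_trm m" "(m, g) \<in> te_mem E" using b g by (auto simp: m0_member)
  have "\<not> tree_holds E (sq t) g"
  proof (cases m)
    case (MProp p)
    then have "p \<notin> sq t" using nb t m by (auto simp: memb_trm_def m0_H)
    then show ?thesis using tree_holds_conj[OF g(2) enc_dis] m MProp by blast
  next
    case (MNegProp p)
    then have "p \<in> sq t" using nb t m enc_memN by (auto simp: memb_trm_def m0_H)
    then show ?thesis using tree_holds_conj[OF g(2) enc_dis] m MNegProp by blast
  next
    case (MFrm g')
    then have "isprop S G" using b by (simp add: m0_prop)
    then show ?thesis using m MFrm by (simp add: memb_trm_def)
  qed
  moreover have "g \<in> te_fids E" using g enc_un by blast
  ultimately show "(case Some (False, H F T) of None \<Rightarrow> False | Some l \<Rightarrow> l \<in> M0)"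
    using t g by (simp add: m0_H)
qed

lemma root_fid: "te_root E c \<in> te_fids E"
  using enc_root enc_un by blast

lemma rs_s10: "rule_sat M0 (NRule (Some (False, H (TSat C) T)) [(True, Concern C), (True, AddConcern C F), (True, Step T)]
        [(True, H F T)])"
proof (simp only: rule_sat.simps, intro impI, elim conjE)
  assume b: "set [(True, Concern C), (True, AddConcern C F), (True, Step T)] \<subseteq> M0"
    and nb: "set [(True, H F T)] \<inter> M0 = {}"
  obtain t where t: "T = TN t" "t \<le> n" using b by (auto simp: m0_step)
  obtain c where c: "C = TC c" "F = TG (te_root E c)" using b by (auto simp: m0_addc)
  have "\<not> tree_holds E (sq t) (te_root E c)" using nb t c root_fid by (auto simp: m0_H)
  then have "\<not> lam_sat S (sq t) c" using enc_sem[of "sq t" c] by simp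
  then have "\<not> csat S (sq t) c" using csat_iff[of S "sq t" c] by simp
  then show "(case Some (False, H (TSat C) T) of None \<Rightarrow> False | Some l \<Rightarrow> l \<in> M0)"
    using t c by (simp add: m0_H)
qed

lemma rs_s11: "rule_sat M0 (NRule (Some (False, H (TSat X) T)) [(True, SubCo X Y), (True, Concern X), (True, Concern Y),
        (True, Step T)] [(True, H (TSat Y) T)])"
proof (simp only: rule_sat.simps, intro impI, elim conjE)
  assume b: "set [(True, SubCo X Y), (True, Concern X), (True, Concern Y), (True, Step T)] \<subseteq> M0"
    and nb: "set [(True, H (TSat Y) T)] \<inter> M0 = {}"
  obtain t where t: "T = TN t" "t \<le> n" using b by (auto simp: m0_step)
  obtain x y where xy: "X = TC x" "Y = TC y" "(x, y) \<in> cps_subco S" using b by (auto simp: m0_subco)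
  have "\<not> csat S (sq t) y" using nb t xy by (auto simp: m0_H)
  then have "\<not> csat S (sq t) x" using csat_iff[of S "sq t" x] xy(3) by auto
  then show "(case Some (False, H (TSat X) T) of None \<Rightarrow> False | Some l \<Rightarrow> l \<in> M0)"
    using t xy by (simp add: m0_H)
qed

lemma rs_s12: "rule_sat M0 (NRule (Some (False, H (TSat X) T)) [(True, SubCo X Y), (False, H (TSat Y) T),
        (True, Concern X), (True, Concern Y), (True, Step T)] [])"
proof (simp only: rule_sat.simps, intro impI, elim conjE)
  assume b: "set [(True, SubCo X Y), (False, H (TSat Y) T),
        (True, Concern X), (True, Concern Y), (True, Step T)] \<subseteq> M0"
  obtain t where t: "T = TN t" "t \<le> n" using b by (auto simp: m0_step)
  obtain x y where xy: "X = TC x" "Y = TC y" "(x, y) \<in> cps_subco S" using b by (auto simp: m0_subco)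
  have "\<not> csat S (sq t) y" using b t xy by (auto simp: m0_H)
  then have "\<not> csat S (sq t) x" using csat_iff[of S "sq t" x] xy(3) by auto
  then show "(case Some (False, H (TSat X) T) of None \<Rightarrow> False | Some l \<Rightarrow> l \<in> M0)"
    using t xy by (simp add: m0_H)
qed

lemma rs_s13: "rule_sat M0 (NRule (Some (True, H (TSat C) T)) [(True, Concern C), (True, Step T)]
        [(False, H (TSat C) T)])"
  by (auto simp: m0_step m0_concern m0_H)

lemma rs_choice: "t < n \<Longrightarrow> rule_sat M0 (CRule 1 1 {(True, Occurs (TA a) (TN t)) | a. True} [(True, Step (TN t))] [])"
proof -
  assume t: "t < n"
  have "{(True, Occurs (TA a) (TN t)) | a. True} \<inter> M0 = {(True, Occurs (TA (\<alpha> ! t)) (TN t))}"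
    using t by (auto simp: m0_occ)
  then show ?thesis by simp
qed

lemma rs_c1: "rule_sat M0 (NRule None [(True, Occurs A T)] [(True, Exec A T)])"
  using sq_exec by (auto simp: m0_occ m0_exec)

lemma rs_c2: "c \<in> \<Sigma> \<Longrightarrow> rule_sat M0 (NRule None [] [(True, H (TSat (TC c)) (TN n))])"
  using sq_sat by (auto simp: m0_H)


lemma m0_sat: "\<forall>r\<in>P. rule_sat M0 r"
  unfolding pi_delta_def pi_plan_def pi_sys_def pi_init_def pi_sat_def ball_Un
  apply (intro conjI; (blast intro: rs_exec rs_dyn rs_stat rs_inT rs_inF rs_s1 rs_s2 rs_s3 rs_s4 rs_s5 rs_s6 rs_s7 rs_s8
      rs_s9 rs_s10 rs_s11 rs_s12 rs_s13 rs_choice rs_c1 rs_c2)?)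
  apply (auto simp: M0_def sq0)
  done


abbreviation D :: "('a, 'f, 'c, 'g) lit \<Rightarrow> bool" where
  "D \<equiv> derivable (reduct P M0)"

lemma der_rule: "NRule (Some l) b nn \<in> P \<Longrightarrow> set nn \<inter> M0 = {} \<Longrightarrow> (\<forall>x\<in>set b. D x) \<Longrightarrow> D l"
proof -
  assume r: "NRule (Some l) b nn \<in> P" and nn: "set nn \<inter> M0 = {}" and bd: "\<forall>x\<in>set b. D x"
  have "(l, b) \<in> reduct P M0" unfolding reduct_def using r nn by blast
  then show "D l" using bd by (rule derivable.intros)
qed

lemma der_crule: assumes "CRule lo hi C b nn \<in> P" "set nn \<inter> M0 = {}" "l \<in> C \<inter> M0" "\<forall>x\<in>set b. D x"
  shows "D l"
proof -
  have "(l, b) \<in> {(l, p) | l lo hi C p n. CRule lo hi C p n \<in> P \<and> set n \<inter> M0 = {} \<and> l \<in> C \<inter> M0}"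
    using assms(1-3) by blast
  then have "(l, b) \<in> reduct P M0" unfolding reduct_def by (rule UnI2)
  then show "D l" using assms(4) by (rule derivable.intros)
qed

lemma der_fact: "NRule (Some l) [] [] \<in> P \<Longrightarrow> D l"
  using der_rule[of l "[]" "[]"] by simp

lemma d_step: "t \<le> n \<Longrightarrow> D (True, Step (TN t))"
  by (rule der_fact) (simp add: pdefs)

lemma d_formula: "isform E T \<Longrightarrow> D (True, Formula T)"
proof (induction T)
  case (TG g)
  then show ?case by (intro der_fact) (simp add: pdefs)
next
  case (TNeg T)
  then have "D (True, Formula T)" by simp
  then show ?case by (intro der_rule[of _ "[(True, Formula T)]" "[]"]) (simp_all add: pdefs)
qed simp_all

lemma d_prop: "isprop S T \<Longrightarrow> D (True, Prop T)"
proof (induction T)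
  case (TF p)
  then show ?case by (intro der_fact) (simp add: pdefs)
next
  case (TNeg T)
  then have "D (True, Prop T)" by simp
  then show ?case by (intro der_rule[of _ "[(True, Prop T)]" "[]"]) (simp_all add: pdefs)
qed simp_all

lemma d_concern: "D (True, Concern (TC c))"
  by (rule der_fact) (simp add: pdefs)
lemma d_subco: "(x, y) \<in> cps_subco S \<Longrightarrow> D (True, SubCo (TC x) (TC y))"
  by (rule der_fact) (simp add: pdefs)
lemma d_addby: "(x, y) \<in> cps_addby S \<Longrightarrow> D (True, AddBy (TC x) (TF y))"
  by (rule der_fact) (simp add: pdefs)
lemma d_action: "D (True, Action (TA a))"
  by (rule der_fact) (simp add: pdefs)
lemma d_fluent: "D (True, Fluent (TF a))"
  by (rule der_fact) (simp add: pdefs)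
lemma d_addc: "D (True, AddConcern (TC c) (TG (te_root E c)))"
  by (rule der_fact) (simp add: pdefs)
lemma d_conj: "g \<in> te_conj E \<Longrightarrow> D (True, Conjunction (TG g))"
  by (rule der_fact) (simp add: pdefs)
lemma d_disj: "g \<in> te_disj E \<Longrightarrow> D (True, Disjunction (TG g))"
  by (rule der_fact) (simp add: pdefs)
lemma d_member: "(m, g) \<in> te_mem E \<Longrightarrow> D (True, Member (memb_trm m) (TG g))"
  by (rule der_fact) (simp add: pdefs, blast)
lemma d_init: "D ((f \<in> I), H (TF f) (TN 0))"
  by (cases "f \<in> I"; rule der_fact) (simp_all add: pdefs)

lemma d_occ: "t < n \<Longrightarrow> D (True, Occurs (TA (\<alpha> ! t)) (TN t))"
proof -
  assume t: "t < n"
  have "CRule 1 1 {(True, Occurs (TA a) (TN t)) | a. True} [(True, Step (TN t))] [] \<in> pi_plan n \<Sigma>"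
    unfolding pi_plan_def using t by blast
  then have r: "CRule 1 1 {(True, Occurs (TA a) (TN t)) | a. True} [(True, Step (TN t))] [] \<in> P" by blast
  have m: "(True, Occurs (TA (\<alpha> ! t)) (TN t)) \<in> {(True, Occurs (TA a) (TN t)) | a. True} \<inter> M0"
    using t by (auto simp: m0_occ)
  show ?thesis by (rule der_crule[OF r _ m]) (use d_step t in auto)
qed


lemma d_inert: "t \<le> n \<Longrightarrow> D (hstar q (TN t)) \<Longrightarrow> q \<in> flits (sq (Suc t)) \<Longrightarrow> D (hstar q (TN (Suc t)))"
proof -
  assume t: "t \<le> n" and dq: "D (hstar q (TN t))" and q: "q \<in> flits (sq (Suc t))"
  obtain f b where fb: "q = (f, b)" by (cases q)
  show ?thesis
  proof (cases b)
    case True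
    have r: "NRule (Some (True, H (TF f) (TN (Suc t))))
        [(True, Step (TN t)), (True, H (TF f) (TN t))] [(False, H (TF f) (TN (Suc t)))] \<in> P"
      by (simp add: pdefs)
    show ?thesis unfolding fb hstar_def using True
      apply simp
      apply (rule der_rule[OF r])
      using q fb True t dq d_step[OF t] by (auto simp: m0_HTF hstar_def)
  next
    case False
    have r: "NRule (Some (False, H (TF f) (TN (Suc t))))
        [(True, Step (TN t)), (False, H (TF f) (TN t))] [(True, H (TF f) (TN (Suc t)))] \<in> P"
      by (simp add: pdefs)
    show ?thesis unfolding fb hstar_def using False
      apply simp
      apply (rule der_rule[OF r])
      using q fb False t dq d_step[OF t] by (auto simp: m0_HTF hstar_def)
  qed
qed

lemma d_fl: "t \<le> Suc n \<Longrightarrow> q \<in> flits (sq t) \<Longrightarrow> D (hstar q (TN t))"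
proof (induction t arbitrary: q)
  case 0
  obtain f b where fb: "q = (f, b)" by (cases q)
  then have "b = (f \<in> I)" using 0 sq0 by simp
  then show ?case using d_init[of f] fb by (simp add: hstar_def)
next
  case (Suc t)
  have tn: "t \<le> n" using Suc.prems by simp
  have IH: "\<And>q. q \<in> flits (sq t) \<Longrightarrow> D (hstar q (TN t))" using Suc.IH tn by simp
  have inert: "\<And>q. q \<in> flits (sq t) \<Longrightarrow> q \<in> flits (sq (Suc t)) \<Longrightarrow> D (hstar q (TN (Suc t)))"
    using d_inert[OF tn] IH by blast
  show ?case
  proof (cases "t < n")
    case False
    then have "t = n" using tn by simp
    then show ?thesis using inert Suc.prems sq_end by simp
  next
    case True
    let ?X = "direct_eff S (\<alpha> ! t) (sq t) \<union> (flits (sq t) \<inter> flits (sq (Suc t)))"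
    have "cn S ?X \<subseteq> {q. D (hstar q (TN (Suc t)))}"
    proof (rule cn_least)
      show "?X \<subseteq> {q. D (hstar q (TN (Suc t)))}"
      proof
        fix l assume "l \<in> ?X"
        then show "l \<in> {q. D (hstar q (TN (Suc t)))}"
        proof
          assume "l \<in> direct_eff S (\<alpha> ! t) (sq t)"
          then obtain ps where ps: "(\<alpha> ! t, l, ps) \<in> cps_dyn S" "holds_all (sq t) ps"
            unfolding direct_eff_def by blast
          let ?r = "NRule (Some (hstar l (TN (Suc t))))
            ((True, Step (TN t)) # (True, Occurs (TA (\<alpha> ! t)) (TN t)) # map (\<lambda>q. hstar q (TN t)) ps) []
              :: ('a, 'f, 'c, 'g) rule"
          have "?r \<in> {NRule (Some (hstar l (TN (Suc t))))
            ((True, Step (TN t)) # (True, Occurs (TA a) (TN t)) # map (\<lambda>q. hstar q (TN t)) ps) []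
            | a l ps t. (a, l, ps) \<in> cps_dyn S}" using ps by blast
          then have r: "?r \<in> P" unfolding pi_delta_def pi_sys_def by blast
          have "D (hstar l (TN (Suc t)))"
            apply (rule der_rule[OF r])
            using d_step[OF tn] d_occ[OF True] IH ps(2) unfolding holds_all_def by auto
          then show ?thesis by simp
        next
          assume "l \<in> flits (sq t) \<inter> flits (sq (Suc t))"
          then show ?thesis using inert by blast
        qed
      qed
    next
      show "\<forall>(l, ps)\<in>cps_stat S. set ps \<subseteq> {q. D (hstar q (TN (Suc t)))} \<longrightarrow> l \<in> {q. D (hstar q (TN (Suc t)))}"
      proof (intro ballI impI, clarify)
        fix l ps assume ps: "(l, ps) \<in> cps_stat S" "set ps \<subseteq> {q. D (hstar q (TN (Suc t)))}"
        let ?r = "NRule (Some (hstar l (TN (Suc t)))) ((True, Step (TN (Suc t))) # map (\<lambda>q. hstar q (TN (Suc t))) ps) []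
            :: ('a, 'f, 'c, 'g) rule"
        have "?r \<in> {NRule (Some (hstar l T)) ((True, Step T) # map (\<lambda>q. hstar q T) ps) []
        | l ps T. (l, ps) \<in> cps_stat S}" using ps by blast
        then have r: "?r \<in> P" unfolding pi_delta_def pi_sys_def by blast
        have st: "Suc t \<le> n" using True by simp
        show "D (hstar l (TN (Suc t)))"
          apply (rule der_rule[OF r])
          using d_step[OF st] ps(2) by auto
      qed
    qed
    then show ?thesis using Suc.prems sq_flits[OF True] by blast
  qed
qed


lemma d_fl': "t \<le> Suc n \<Longrightarrow> D (f \<in> sq t, H (TF f) (TN t))"
  using d_fl[of t "(f, f \<in> sq t)"] by (simp add: hstar_def)

lemma d_exec: "t \<le> n \<Longrightarrow> executable S a (sq t) \<Longrightarrow> D (True, Exec (TA a) (TN t))"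
proof -
  assume t: "t \<le> n" and ex: "executable S a (sq t)"
  then obtain ps where ps: "(a, ps) \<in> cps_exec S" "holds_all (sq t) ps" unfolding executable_def by blast
  let ?r = "NRule (Some (True, Exec (TA a) (TN t))) ((True, Step (TN t)) # map (\<lambda>q. hstar q (TN t)) ps) []
      :: ('a, 'f, 'c, 'g) rule"
  have "?r \<in> {NRule (Some (True, Exec (TA a) T)) ((True, Step T) # map (\<lambda>q. hstar q T) ps) []
        | a ps T. (a, ps) \<in> cps_exec S}" using ps by blast
  then have r: "?r \<in> P" unfolding pi_delta_def pi_sys_def by blast
  show ?thesis
    apply (rule der_rule[OF r])
    using d_step[OF t] d_fl[of t] t ps(2) unfolding holds_all_def by auto
qed

lemma d_negF: "t \<le> n \<Longrightarrow> p \<in> cps_props S \<Longrightarrow> p \<notin> sq t \<Longrightarrow> D (True, H (TNeg (TF p)) (TN t))"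
proof -
  assume t: "t \<le> n" and p: "p \<in> cps_props S" "p \<notin> sq t"
  have r: "NRule (Some (True, H (TNeg (TF p)) (TN t))) [(True, Step (TN t)), (True, Prop (TF p)), (False, H (TF p) (TN t))] [] \<in> P"
    by (simp add: pdefs)
  show ?thesis
    apply (rule der_rule[OF r])
    using d_step[OF t] d_prop[of "TF p"] d_fl'[of t p] t p by auto
qed

lemma d_tree: "t \<le> n \<Longrightarrow> g \<in> te_fids E \<Longrightarrow> D (tree_holds E (sq t) g, H (TG g) (TN t))"
proof (induction g rule: wf_induct[OF enc_wf])
  case (1 g)
  note IH = 1(1)[rule_format]
  have t: "t \<le> n" and gf: "g \<in> te_fids E" using 1 by auto
  have base: "D (True, Step (TN t))" "D (True, Formula (TG g))" using d_step[OF t] d_formula[of "TG g"] gf by auto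
  consider (c) "g \<in> te_conj E" | (d) "g \<in> te_disj E" using gf enc_un by blast
  then show ?case
  proof cases
    case c
    have dc: "D (True, Conjunction (TG g))" using d_conj[OF c] .
    show ?thesis
    proof (cases "tree_holds E (sq t) g")
      case True
      have r: "NRule (Some (True, H (TG g) (TN t))) [(True, Step (TN t)), (True, Formula (TG g)), (True, Conjunction (TG g))]
        [(False, H (TG g) (TN t))] \<in> P" by (simp add: pdefs)
      show ?thesis using True
        apply simp
        apply (rule der_rule[OF r])
        using base dc True t gf by (auto simp: m0_H)
    next
      case False
      then consider (p) p where "(MProp p, g) \<in> te_mem E" "p \<notin> sq t"
        | (np) p where "(MNegProp p, g) \<in> te_mem E" "p \<in> sq t"
        | (f) g' where "(MFrm g', g) \<in> te_mem E" "\<not> tree_holds E (sq t) g'"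
        using tree_holds_conj[OF c enc_dis] by blast
      then show ?thesis
      proof cases
        case p
        have r: "NRule (Some (False, H (TG g) (TN t))) [(True, Step (TN t)), (True, Prop (TF p)), (True, Formula (TG g)),
          (True, Conjunction (TG g)), (True, Member (TF p) (TG g))] [(True, H (TF p) (TN t))] \<in> P" by (simp add: pdefs)
        have dm: "D (True, Member (TF p) (TG g))" using d_member[OF p(1)] by (simp add: memb_trm_def)
        show ?thesis using False
          apply simp
          apply (rule der_rule[OF r])
          using base dc dm d_prop[of "TF p"] enc_memP[OF p(1)] p(2) t by (auto simp: m0_H)
      next
        case np
        have r: "NRule (Some (False, H (TG g) (TN t))) [(True, Step (TN t)), (True, Prop (TNeg (TF p))), (True, Formula (TG g)),
          (True, Conjunction (TG g)), (True, Member (TNeg (TF p)) (TG g))] [(True, H (TNeg (TF p)) (TN t))] \<in> P" by (simp add: pdefs)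
        have dm: "D (True, Member (TNeg (TF p)) (TG g))" using d_member[OF np(1)] by (simp add: memb_trm_def)
        show ?thesis using False
          apply simp
          apply (rule der_rule[OF r])
          using base dc dm d_prop[of "TNeg (TF p)"] enc_memN[OF np(1)] np(2) t by (auto simp: m0_H)
      next
        case f
        have r: "NRule (Some (False, H (TG g) (TN t))) [(True, Step (TN t)), (True, Formula (TG g')), (True, Formula (TG g)),
          (True, Conjunction (TG g)), (True, Member (TG g') (TG g))] [(True, H (TG g') (TN t))] \<in> P" by (simp add: pdefs)
        have dm: "D (True, Member (TG g') (TG g))" using d_member[OF f(1)] by (simp add: memb_trm_def)
        show ?thesis using False
          apply simp
          apply (rule der_rule[OF r])
          using base dc dm d_formula[of "TG g'"] enc_memF[OF f(1)] f(2) t by (auto simp: m0_H)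
      qed
    qed
  next
    case d
    have dd: "D (True, Disjunction (TG g))" using d_disj[OF d] .
    show ?thesis
    proof (cases "tree_holds E (sq t) g")
      case False
      have r: "NRule (Some (False, H (TG g) (TN t))) [(True, Step (TN t)), (True, Formula (TG g)), (True, Disjunction (TG g))]
        [(True, H (TG g) (TN t))] \<in> P" by (simp add: pdefs)
      show ?thesis using False
        apply simp
        apply (rule der_rule[OF r])
        using base dd False t gf by (auto simp: m0_H)
    next
      case True
      then consider (p) p where "(MProp p, g) \<in> te_mem E" "p \<in> sq t"
        | (np) p where "(MNegProp p, g) \<in> te_mem E" "p \<notin> sq t"
        | (f) g' where "(MFrm g', g) \<in> te_mem E" "tree_holds E (sq t) g'"
        using tree_holds_disj[OF d enc_dis] by blast
      then show ?thesis
      proof cases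
        case p
        have r: "NRule (Some (True, H (TG g) (TN t))) [(True, Step (TN t)), (True, Formula (TG g)), (True, Disjunction (TG g)),
          (True, Member (TF p) (TG g)), (True, H (TF p) (TN t))] [] \<in> P" by (simp add: pdefs)
        have dm: "D (True, Member (TF p) (TG g))" using d_member[OF p(1)] by (simp add: memb_trm_def)
        show ?thesis using True
          apply simp
          apply (rule der_rule[OF r])
          using base dd dm d_fl'[of t p] p(2) t by auto
      next
        case np
        have r: "NRule (Some (True, H (TG g) (TN t))) [(True, Step (TN t)), (True, Formula (TG g)), (True, Disjunction (TG g)),
          (True, Member (TNeg (TF p)) (TG g)), (True, H (TNeg (TF p)) (TN t))] [] \<in> P" by (simp add: pdefs)
        have dm: "D (True, Member (TNeg (TF p)) (TG g))" using d_member[OF np(1)] by (simp add: memb_trm_def)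
        show ?thesis using True
          apply simp
          apply (rule der_rule[OF r])
          using base dd dm d_negF[OF t enc_memN[OF np(1)] np(2)] by auto
      next
        case f
        have r: "NRule (Some (True, H (TG g) (TN t))) [(True, Step (TN t)), (True, Formula (TG g)), (True, Disjunction (TG g)),
          (True, Member (TG g') (TG g)), (True, H (TG g') (TN t))] [] \<in> P" by (simp add: pdefs)
        have dm: "D (True, Member (TG g') (TG g))" using d_member[OF f(1)] by (simp add: memb_trm_def)
        have "D (tree_holds E (sq t) g', H (TG g') (TN t))" using IH[of g'] f(1) t enc_memF[OF f(1)] by simp
        then have dg': "D (True, H (TG g') (TN t))" using f(2) by simp
        show ?thesis using True
          apply simp
          apply (rule der_rule[OF r])
          using base dd dm dg' by auto
      qed
    qed
  qed
qed

lemma d_negG: "t \<le> n \<Longrightarrow> g \<in> te_fids E \<Longrightarrow> \<not> tree_holds E (sq t) g \<Longrightarrow> D (True, H (TNeg (TG g)) (TN t))"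
proof -
  assume t: "t \<le> n" and g: "g \<in> te_fids E" "\<not> tree_holds E (sq t) g"
  have r: "NRule (Some (True, H (TNeg (TG g)) (TN t))) [(True, Step (TN t)), (True, Formula (TG g)), (False, H (TG g) (TN t))] [] \<in> P"
    by (simp add: pdefs)
  have "D (False, H (TG g) (TN t))" using d_tree[OF t g(1)] g(2) by simp
  then show ?thesis
    apply -
    apply (rule der_rule[OF r])
    using d_step[OF t] d_formula[of "TG g"] g by auto
qed

lemma d_sat: "t \<le> n \<Longrightarrow> D (csat S (sq t) c, H (TSat (TC c)) (TN t))"
proof -
  assume t: "t \<le> n"
  show ?thesis
  proof (cases "csat S (sq t) c")
    case True
    have r: "NRule (Some (True, H (TSat (TC c)) (TN t))) [(True, Concern (TC c)), (True, Step (TN t))]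
        [(False, H (TSat (TC c)) (TN t))] \<in> P" by (simp add: pdefs)
    show ?thesis using True
      apply simp
      apply (rule der_rule[OF r])
      using d_step[OF t] d_concern True t by (auto simp: m0_H)
  next
    case False
    then have "\<not> lam_sat S (sq t) c \<or> (\<exists>y. (c, y) \<in> cps_subco S \<and> \<not> csat S (sq t) y)"
      using csat_iff[of S "sq t" c] by blast
    then show ?thesis
    proof
      assume nl: "\<not> lam_sat S (sq t) c"
      then have nt: "\<not> tree_holds E (sq t) (te_root E c)" using enc_sem by blast
      have r: "NRule (Some (False, H (TSat (TC c)) (TN t))) [(True, Concern (TC c)), (True, AddConcern (TC c) (TG (te_root E c))),
        (True, Step (TN t))] [(True, H (TG (te_root E c)) (TN t))] \<in> P" by (simp add: pdefs)
      show ?thesis using False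
        apply simp
        apply (rule der_rule[OF r])
        using d_step[OF t] d_concern d_addc nt t root_fid by (auto simp: m0_H)
    next
      assume "\<exists>y. (c, y) \<in> cps_subco S \<and> \<not> csat S (sq t) y"
      then obtain y where y: "(c, y) \<in> cps_subco S" "\<not> csat S (sq t) y" by blast
      have r: "NRule (Some (False, H (TSat (TC c)) (TN t))) [(True, SubCo (TC c) (TC y)), (True, Concern (TC c)),
        (True, Concern (TC y)), (True, Step (TN t))] [(True, H (TSat (TC y)) (TN t))] \<in> P" by (simp add: pdefs)
      show ?thesis using False
        apply simp
        apply (rule der_rule[OF r])
        using d_step[OF t] d_concern d_subco[OF y(1)] y(2) t by (auto simp: m0_H)
    qed
  qed
qed

lemma m0_der: "\<forall>l\<in>M0. D l"
proof
  fix l assume l: "l \<in> M0"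
  show "D l"
    using l[unfolded M0_def]
    apply (simp only: Un_iff mem_Collect_eq)
    apply (elim disjE exE conjE)
    apply (simp_all only:)
    apply (auto intro: d_step d_action d_fluent d_concern d_prop d_subco d_addby d_formula d_conj d_disj
       d_member d_addc d_exec d_occ d_fl' d_tree d_negG d_negF d_sat)
    done
qed

lemma m0_as: "answer_set P M0"
  by (rule answer_setI[OF m0_cons m0_sat m0_der])

lemma m0_occs: "\<forall>i<n. (True, Occurs (TA (\<alpha> ! i)) (TN i)) \<in> M0"
  by (auto simp: m0_occ)

end

lemma trans_seq_ex: "trans_seq S as s \<noteq> {} \<Longrightarrow>
  \<exists>st. st 0 = s \<and> (\<forall>i<length as. st (Suc i) \<in> trans S (as ! i) (st i))"
proof (induction as arbitrary: s)
  case Nil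
  then show ?case by (intro exI[of _ "\<lambda>_. s"]) simp
next
  case (Cons a as)
  then obtain s' where s': "s' \<in> trans S a s" "trans_seq S as s' \<noteq> {}" by auto
  obtain st where st: "st 0 = s'" "\<forall>i<length as. st (Suc i) \<in> trans S (as ! i) (st i)"
    using Cons.IH[OF s'(2)] by blast
  define st' where "st' = (\<lambda>i. case i of 0 \<Rightarrow> s | Suc j \<Rightarrow> st j)"
  have "st' 0 = s" unfolding st'_def by simp
  moreover have "\<forall>i<length (a # as). st' (Suc i) \<in> trans S ((a # as) ! i) (st' i)"
  proof (intro allI impI)
    fix i assume i: "i < length (a # as)"
    show "st' (Suc i) \<in> trans S ((a # as) ! i) (st' i)"
    proof (cases i)
      case 0 then show ?thesis using s'(1) st(1) unfolding st'_def by simp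
    next
      case (Suc j) then show ?thesis using st(2) i unfolding st'_def by simp
    qed
  qed
  ultimately show ?case by blast
qed

theorem mainTheorem3:
  fixes S :: "('co, 'a, 'f, 'c, 'u) cps"
    and E :: "('f, 'c, 'g) tree_enc"
    and I :: "'f set"
    and \<Sigma> :: "'c set"
    and n :: nat
    and \<alpha> :: "'a list"
  assumes "wf_cps S"
    and "enc_ok S E"
    and "is_state S I"
    and "length \<alpha> = n"
  shows "mitigation S \<Sigma> I \<alpha> \<longleftrightarrow>
    (\<exists>M :: ('a, 'f, 'c, 'g) lit set.
        answer_set (pi_delta S E I n \<union> pi_plan n \<Sigma>) M \<and>
        (\<forall>i < n. (True, Occurs (TA (\<alpha> ! i)) (TN i)) \<in> M))"
proof
  assume mit: "mitigation S \<Sigma> I \<alpha>"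
  then have ne: "trans_seq S \<alpha> I \<noteq> {}" unfolding mitigation_def by (rule conjunct1)
  obtain st where st: "st 0 = I" "\<forall>i<length \<alpha>. st (Suc i) \<in> trans S (\<alpha> ! i) (st i)"
    using trans_seq_ex[OF ne] by blast
  interpret cpsctx S E I n \<Sigma> by (rule cpsctx.intro[OF assms(1-3)])
  have "trans_seq S \<alpha> (st 0) = {st (length \<alpha>)}"
  proof (rule trans_seq_det[OF det])
    show "is_state S (st 0)" using st(1) assms(3) by simp
    show "\<forall>i<length \<alpha>. st (Suc i) \<in> trans S (\<alpha> ! i) (st i)" by (rule st(2))
  qed
  then have ts: "trans_seq S \<alpha> I = {st n}" using st(1) assms(4) by simp
  have cs: "\<forall>c\<in>\<Sigma>. csat S (st n) c" using mit unfolding mitigation_def ts by blast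
  define sq where "sq = (\<lambda>t. st (min t n))"
  interpret mctx S E I n \<Sigma> \<alpha> sq
  proof unfold_locales
    show "length \<alpha> = n" by (rule assms(4))
    show "sq 0 = I" unfolding sq_def using st by simp
    show "\<forall>t<n. sq (Suc t) \<in> trans S (\<alpha> ! t) (sq t)"
    proof (intro allI impI)
      fix t assume t: "t < n"
      then have "st (Suc t) \<in> trans S (\<alpha> ! t) (st t)" using st(2) assms(4) by blast
      moreover have "min (Suc t) n = Suc t" "min t n = t" using t by auto
      ultimately show "sq (Suc t) \<in> trans S (\<alpha> ! t) (sq t)" unfolding sq_def by simp
    qed
    show "sq (Suc n) = sq n" unfolding sq_def by simp
    show "\<forall>c\<in>\<Sigma>. csat S (sq n) c" unfolding sq_def using cs by simp
  qed
  show "\<exists>M :: ('a, 'f, 'c, 'g) lit set. answer_set (pi_delta S E I n \<union> pi_plan n \<Sigma>) M \<and>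
        (\<forall>i < n. (True, Occurs (TA (\<alpha> ! i)) (TN i)) \<in> M)"
    using m0_as m0_occs by blast
next
  assume "\<exists>M :: ('a, 'f, 'c, 'g) lit set. answer_set (pi_delta S E I n \<union> pi_plan n \<Sigma>) M \<and>
        (\<forall>i < n. (True, Occurs (TA (\<alpha> ! i)) (TN i)) \<in> M)"
  then obtain M :: "('a, 'f, 'c, 'g) lit set" where M: "answer_set (pi_delta S E I n \<union> pi_plan n \<Sigma>) M"
    "\<forall>i < n. (True, Occurs (TA (\<alpha> ! i)) (TN i)) \<in> M" by blast
  interpret asctx2 S E I n \<Sigma> M \<alpha>
  proof (intro asctx2.intro asctx.intro cpsctx.intro asctx_axioms.intro asctx2_axioms.intro)
    show "wf_cps S" "enc_ok S E" "is_state S I" "length \<alpha> = n" by (rule assms)+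
    show "answer_set (pi_delta S E I n \<union> pi_plan n \<Sigma>) M" by (rule M(1))
    show "\<forall>i < n. (True, Occurs (TA (\<alpha> ! i)) (TN i)) \<in> M" by (rule M(2))
  qed
  show "mitigation S \<Sigma> I \<alpha>" by (rule mitig)
qed

end
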